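(* Let $((X_t,\sigma_t))_{t\in\mathbb Z}$ be the stationary ergodic EGARCH process with parameters satisfying $0\le\beta<1$ and $\delta\ge|\gamma|$. If $$\mathbb E\Big[\log\max\Big\{\beta,\ 2^{-1}\exp\Big(2^{-1}\sum_{k=0}^\infty\beta^k(\gamma Z_{-k-1}+\delta|Z_{-k-1}|)\Big)(\gamma Z_0+\delta|Z_0|)-\beta\Big\}\Big]<0,$$ then the process is invertible, namely $|\hat\sigma_t^2-\sigma_t^2|\xrightarrow{\text{e.a.s.}}0$ as $t\to\infty$.
   Context: $(Z_t)$ i.i.d. with $\mathbb EZ_0=0$, $\mathbb EZ_0^2=1$. EGARCH: $X_t=\sigma_tZ_t$, $\log\sigma_t^2=\alpha+\beta\log\sigma_{t-1}^2+\gamma Z_{t-1}+\delta|Z_{t-1}|$, $t\in\mathbb Z$, $\alpha,\gamma,\delta\in\mathbb R$; its stationary solution is $\log\sigma_t^2=\alpha(1-\beta)^{-1}+\sum_{k\ge0}\beta^k(\gamma Z_{t-1-k}+\delta|Z_{t-1-k}|)$. Approximation from observations: choose $\log\hat\sigma_0^2\in[\alpha(1-\beta)^{-1},\infty)$ and set $\log\hat\sigma_{t+1}^2=\alpha+\beta\log\hat\sigma_t^2+(\gamma X_t+\delta|X_t|)\exp(-\log\hat\sigma_t^2/2)$, $t\ge0$. $v_t\xrightarrow{\text{e.a.s.}}0$ means there is $\gamma'>1$ with $\gamma'^t|v_t|\to0$ a.s. *)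

theory Defs
  imports "HOL-Probability.Probability"
begin

definition egarch_logsig ::
  "real \<Rightarrow> real \<Rightarrow> real \<Rightarrow> real \<Rightarrow> (int \<Rightarrow> 'a \<Rightarrow> real) \<Rightarrow> int \<Rightarrow> 'a \<Rightarrow> real" where
  "egarch_logsig \<alpha> \<beta> \<gamma> \<delta> Z t \<omega> =
     \<alpha> / (1 - \<beta>) +
     (\<Sum>k. \<beta> ^ k * (\<gamma> * Z (t - 1 - int k) \<omega> + \<delta> * \<bar>Z (t - 1 - int k) \<omega>\<bar>))"

definition egarch_X ::
  "real \<Rightarrow> real \<Rightarrow> real \<Rightarrow> real \<Rightarrow> (int \<Rightarrow> 'a \<Rightarrow> real) \<Rightarrow> int \<Rightarrow> 'a \<Rightarrow> real" where
  "egarch_X \<alpha> \<beta> \<gamma> \<delta> Z t \<omega> = exp (egarch_logsig \<alpha> \<beta> \<gamma> \<delta> Z t \<omega> / 2) * Z t \<omega>"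

primrec egarch_loghat ::
  "real \<Rightarrow> real \<Rightarrow> real \<Rightarrow> real \<Rightarrow> (int \<Rightarrow> 'a \<Rightarrow> real) \<Rightarrow> real \<Rightarrow> nat \<Rightarrow> 'a \<Rightarrow> real" where
  "egarch_loghat \<alpha> \<beta> \<gamma> \<delta> Z s0 0 \<omega> = s0"
| "egarch_loghat \<alpha> \<beta> \<gamma> \<delta> Z s0 (Suc t) \<omega> =
     \<alpha> + \<beta> * egarch_loghat \<alpha> \<beta> \<gamma> \<delta> Z s0 t \<omega>
     + (\<gamma> * egarch_X \<alpha> \<beta> \<gamma> \<delta> Z (int t) \<omega> + \<delta> * \<bar>egarch_X \<alpha> \<beta> \<gamma> \<delta> Z (int t) \<omega>\<bar>)
       * exp (- egarch_loghat \<alpha> \<beta> \<gamma> \<delta> Z s0 t \<omega> / 2)"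

definition egarch_inv_arg ::
  "real \<Rightarrow> real \<Rightarrow> real \<Rightarrow> (int \<Rightarrow> 'a \<Rightarrow> real) \<Rightarrow> 'a \<Rightarrow> real" where
  "egarch_inv_arg \<beta> \<gamma> \<delta> Z \<omega> =
     max \<beta> ((1/2) * exp ((1/2) * (\<Sum>k. \<beta> ^ k * (\<gamma> * Z (- int k - 1) \<omega> + \<delta> * \<bar>Z (- int k - 1) \<omega>\<bar>)))
            * (\<gamma> * Z 0 \<omega> + \<delta> * \<bar>Z 0 \<omega>\<bar>) - \<beta>)"

text \<open>"E[log Y] < 0" for a nonnegative random variable Y, with log 0 = -infinity:
  E[(log Y)^+] < E[(log Y)^-] (this forces E[(log Y)^+] finite, so E[log Y] is well defined and negative).\<close>
definition expect_log_neg :: "'a measure \<Rightarrow> ('a \<Rightarrow> real) \<Rightarrow> bool" where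
  "expect_log_neg M Y \<longleftrightarrow>
     (\<integral>\<^sup>+ \<omega>. (if Y \<omega> > 0 then ennreal (max 0 (ln (Y \<omega>))) else 0) \<partial>M)
     < (\<integral>\<^sup>+ \<omega>. (if Y \<omega> > 0 then ennreal (max 0 (- ln (Y \<omega>))) else \<infinity>) \<partial>M)"

end

theory Submission
  imports Defs "HOL-Probability.Probability"
begin


lemma exists_sqrt_bracket: "\<exists>k. k^2 \<le> n \<and> n < (Suc k)^2" for n :: nat
proof (induction n)
  case 0 then show ?case by (intro exI[of _ 0]) auto
next
  case (Suc n)
  then obtain k where k: "k^2 \<le> n" "n < (Suc k)^2" by blast
  show ?case
  proof (cases "Suc n < (Suc k)^2")
    case True then show ?thesis using k by (intro exI[of _ k]) auto
  next
    case False
    then have "Suc n = (Suc k)^2" using k by linarith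
    moreover have "(Suc k)^2 < (Suc (Suc k))^2" by (simp add: power2_eq_square)
    ultimately show ?thesis by (intro exI[of _ "Suc k"]) auto
  qed
qed

lemma card_near: "card {j. j < n \<and> j \<le> i + m \<and> i \<le> j + m} \<le> 2*m+1" for i j n m :: nat
proof -
  have "{j. j < n \<and> j \<le> i + m \<and> i \<le> j + m} \<subseteq> {i - m..i+m}" by auto
  then have "card {j. j < n \<and> j \<le> i + m \<and> i \<le> j + m} \<le> card {i - m..i+m}"
    by (intro card_mono) auto
  also have "\<dots> \<le> 2*m+1" by simp
  finally show ?thesis .
qed

lemma (in prob_space) second_moment_sum_bound:
  fixes v :: "nat \<Rightarrow> 'a \<Rightarrow> real" and m n :: nat and \<mu> C :: real
  assumes meas: "\<And>i. v i \<in> borel_measurable M"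
   and nonneg: "\<And>i \<omega>. 0 \<le> v i \<omega>"
   and int2: "\<And>i. integrable M (\<lambda>\<omega>. (v i \<omega>)^2)"
   and mean: "\<And>i. (\<integral>\<omega>. v i \<omega> \<partial>M) = \<mu>"
   and sq: "\<And>i. (\<integral>\<omega>. (v i \<omega>)^2 \<partial>M) \<le> C"
   and cov: "\<And>i j. i + m < j \<Longrightarrow> (\<integral>\<omega>. v i \<omega> * v j \<omega> \<partial>M) = \<mu>^2"
  shows "(\<integral>\<omega>. (\<Sum>i<n. (v i \<omega> - \<mu>))^2 \<partial>M) \<le> real n * ((2*m+1) * C)"
    "integrable M (\<lambda>\<omega>. (\<Sum>i<n. (v i \<omega> - \<mu>))^2)"
proof -
  have int1: "integrable M (v i)" for i
    using square_integrable_imp_integrable[OF meas int2] .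
  have intp: "integrable M (\<lambda>\<omega>. v i \<omega> * v j \<omega>)" for i j
  proof (rule Bochner_Integration.integrable_bound[where f="\<lambda>\<omega>. (v i \<omega>)^2 + (v j \<omega>)^2"])
    show "integrable M (\<lambda>\<omega>. (v i \<omega>)^2 + (v j \<omega>)^2)" using int2 by auto
    show "(\<lambda>\<omega>. v i \<omega> * v j \<omega>) \<in> borel_measurable M" using meas by measurable
    show "AE x in M. norm (v i x * v j x) \<le> norm ((v i x)^2 + (v j x)^2)"
    proof (intro AE_I2)
      fix x
      have "0 \<le> (v i x - v j x)^2" by simp
      then show "norm (v i x * v j x) \<le> norm ((v i x)^2 + (v j x)^2)"
        using nonneg[of i x] nonneg[of j x] mult_nonneg_nonneg[of "v i x" "v j x"]
        apply (simp add: power2_eq_square algebra_simps abs_mult)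
        using mult_nonneg_nonneg[of "v i x" "v j x"] by linarith
    qed
  qed
  have "0 \<le> (\<integral>\<omega>. (v 0 \<omega>)^2 \<partial>M)" by (intro Bochner_Integration.integral_nonneg) simp
  then have C0: "0 \<le> C" using sq[of 0] by linarith
  define c where "c i j = (\<integral>\<omega>. (v i \<omega> - \<mu>) * (v j \<omega> - \<mu>) \<partial>M)" for i j
  have intc: "integrable M (\<lambda>\<omega>. (v i \<omega> - \<mu>) * (v j \<omega> - \<mu>))" for i j
  proof -
    have "(\<lambda>\<omega>. (v i \<omega> - \<mu>) * (v j \<omega> - \<mu>)) = (\<lambda>\<omega>. v i \<omega> * v j \<omega> - \<mu> * v i \<omega> - \<mu> * v j \<omega> + \<mu>^2)"
      by (auto simp: algebra_simps power2_eq_square)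
    then show ?thesis using intp int1 by simp
  qed
  have ceq: "c i j = (\<integral>\<omega>. v i \<omega> * v j \<omega> \<partial>M) - \<mu>^2" for i j
  proof -
    have "(\<lambda>\<omega>. (v i \<omega> - \<mu>) * (v j \<omega> - \<mu>)) = (\<lambda>\<omega>. v i \<omega> * v j \<omega> - \<mu> * v i \<omega> - \<mu> * v j \<omega> + \<mu>^2)"
      by (auto simp: algebra_simps power2_eq_square)
    then have "c i j = (\<integral>\<omega>. v i \<omega> * v j \<omega> - \<mu> * v i \<omega> - \<mu> * v j \<omega> + \<mu>^2 \<partial>M)"
      unfolding c_def by simp
    also have "\<dots> = (\<integral>\<omega>. v i \<omega> * v j \<omega> \<partial>M) - \<mu> * \<mu> - \<mu> * \<mu> + \<mu>^2"
      using intp int1 mean prob_space by simp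
    finally show ?thesis by (simp add: power2_eq_square)
  qed
  have cle: "c i j \<le> (if j \<le> i + m \<and> i \<le> j + m then C else 0)" for i j
  proof (cases "j \<le> i + m \<and> i \<le> j + m")
    case True
    have "(\<integral>\<omega>. v i \<omega> * v j \<omega> \<partial>M) \<le> (\<integral>\<omega>. ((v i \<omega>)^2 + (v j \<omega>)^2)/2 \<partial>M)"
    proof (rule integral_mono[OF intp])
      show "integrable M (\<lambda>\<omega>. ((v i \<omega>)^2 + (v j \<omega>)^2)/2)" using int2 by auto
      fix x
      have "0 \<le> (v i x - v j x)^2" by simp
      then show "v i x * v j x \<le> ((v i x)^2 + (v j x)^2)/2"
        by (simp add: power2_eq_square algebra_simps)
    qed
    also have "\<dots> = ((\<integral>\<omega>. (v i \<omega>)^2 \<partial>M) + (\<integral>\<omega>. (v j \<omega>)^2 \<partial>M))/2"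
      using int2 by simp
    also have "\<dots> \<le> C" using sq[of i] sq[of j] by simp
    finally have "c i j \<le> C" using ceq[of i j] zero_le_power2[of \<mu>] by linarith
    then show ?thesis using True by simp
  next
    case False
    then have "i + m < j \<or> j + m < i" by auto
    then have "(\<integral>\<omega>. v i \<omega> * v j \<omega> \<partial>M) = \<mu>^2"
      using cov[of i j] cov[of j i] by (auto simp: mult.commute)
    then show ?thesis using False ceq[of i j] by auto
  qed
  have sqexp: "(\<Sum>i<n. (v i \<omega> - \<mu>))^2 = (\<Sum>i<n. \<Sum>j<n. (v i \<omega> - \<mu>) * (v j \<omega> - \<mu>))" for \<omega>
    by (simp add: power2_eq_square sum_product)
  show "integrable M (\<lambda>\<omega>. (\<Sum>i<n. (v i \<omega> - \<mu>))^2)"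
    unfolding sqexp using intc by auto
  have "(\<integral>\<omega>. (\<Sum>i<n. (v i \<omega> - \<mu>))^2 \<partial>M) = (\<Sum>i<n. \<Sum>j<n. c i j)"
    unfolding sqexp c_def using intc by (simp add: integral_sum)
  also have "\<dots> \<le> (\<Sum>i<n. \<Sum>j<n. (if j \<le> i + m \<and> i \<le> j + m then C else 0))"
    by (intro sum_mono cle)
  also have "\<dots> \<le> (\<Sum>i<n. (2*m+1) * C)"
  proof (intro sum_mono)
    fix i
    have "(\<Sum>j<n. (if j \<le> i + m \<and> i \<le> j + m then C else 0)) = (\<Sum>j\<in>{j. j < n \<and> j \<le> i + m \<and> i \<le> j + m}. C)"
      by (simp add: sum.If_cases lessThan_def Collect_conj_eq Int_commute Int_left_commute Int_assoc)
    also have "\<dots> = real (card {j. j < n \<and> j \<le> i + m \<and> i \<le> j + m}) * C" by simp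
    also have "\<dots> \<le> real (2*m+1) * C"
      using card_near[of n i m] C0 by (intro mult_right_mono) auto
    finally show "(\<Sum>j<n. (if j \<le> i + m \<and> i \<le> j + m then C else 0)) \<le> (2*m+1) * C" by simp
  qed
  also have "\<dots> = real n * ((2*m+1) * C)" by simp
  finally show "(\<integral>\<omega>. (\<Sum>i<n. (v i \<omega> - \<mu>))^2 \<partial>M) \<le> real n * ((2*m+1) * C)" .
qed

lemma sq_interp_arith:
  fixes \<mu> e :: real and k :: nat
  assumes "0 \<le> \<mu>" "0 < e" "real k \<ge> 3 * (\<mu> + e) / e" "k \<ge> 1"
  shows "real (Suc k)^2 * (\<mu> + e) \<le> real k ^2 * (\<mu> + 2 * e)"
proof -
  have "3 * (\<mu> + e) \<le> real k * e" using assms(2,3) by (simp add: field_simps)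
  then have "real k * (3 * (\<mu> + e)) \<le> real k * (real k * e)" by (intro mult_left_mono) auto
  moreover have "(2 * real k + 1) * (\<mu> + e) \<le> 3 * real k * (\<mu> + e)"
    using assms by (intro mult_right_mono) auto
  ultimately have "(2 * real k + 1) * (\<mu> + e) \<le> real k ^ 2 * e"
    by (simp add: power2_eq_square algebra_simps)
  then show ?thesis by (simp add: power2_eq_square algebra_simps)
qed

lemma frac_aux: "(x::real) > 0 \<Longrightarrow> e > 0 \<Longrightarrow> (x * B) / (x * e)^2 = B / e^2 * inverse x"
  by (simp add: field_simps power2_eq_square)

lemma (in prob_space) slln_upper:
  fixes v :: "nat \<Rightarrow> 'a \<Rightarrow> real" and m :: nat and \<mu> C \<epsilon> :: real
  assumes meas: "\<And>i. v i \<in> borel_measurable M"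
   and nonneg: "\<And>i \<omega>. 0 \<le> v i \<omega>"
   and int2: "\<And>i. integrable M (\<lambda>\<omega>. (v i \<omega>)^2)"
   and mean: "\<And>i. (\<integral>\<omega>. v i \<omega> \<partial>M) = \<mu>"
   and sq: "\<And>i. (\<integral>\<omega>. (v i \<omega>)^2 \<partial>M) \<le> C"
   and cov: "\<And>i j. i + m < j \<Longrightarrow> (\<integral>\<omega>. v i \<omega> * v j \<omega> \<partial>M) = \<mu>^2"
   and eps: "0 < \<epsilon>"
  shows "AE \<omega> in M. eventually (\<lambda>n. (\<Sum>i<n. v i \<omega>) \<le> real n * (\<mu> + \<epsilon>)) sequentially"
proof -
  note smb = second_moment_sum_bound[where v=v and m=m and \<mu>=\<mu> and C=C, OF meas nonneg int2 mean sq cov]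
  have mu0: "0 \<le> \<mu>" using mean[of 0] Bochner_Integration.integral_nonneg[of M "v 0"] nonneg by simp
  define e where "e = \<epsilon> / 2"
  have e0: "0 < e" using eps by (simp add: e_def)
  define B where "B = real (2*m+1) * C"
  define T where "T n \<omega> = (\<Sum>i<n. (v i \<omega> - \<mu>))" for n \<omega>
  define A where "A k = {\<omega> \<in> space M. real (Suc k)^2 * e \<le> T ((Suc k)^2) \<omega>}" for k
  have Ameas: "A k \<in> events" for k
    unfolding A_def T_def using meas by measurable
  have Ale: "measure M (A k) \<le> B / e^2 * inverse (real (Suc k) ^ 2)" for k
  proof -
    let ?N = "(Suc k)^2"
    have "A k \<subseteq> {\<omega> \<in> space M. (real ?N * e)^2 \<le> (T ?N \<omega>)^2}"
    proof
      fix \<omega> assume "\<omega> \<in> A k"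
      then have a: "\<omega> \<in> space M" "real ?N * e \<le> T ?N \<omega>" unfolding A_def by auto
      have "0 \<le> real ?N * e" using e0 by simp
      with a(2) have "(real ?N * e)^2 \<le> (T ?N \<omega>)^2" by (rule power_mono)
      then show "\<omega> \<in> {\<omega> \<in> space M. (real ?N * e)^2 \<le> (T ?N \<omega>)^2}" using a(1) by simp
    qed
    moreover have "{\<omega> \<in> space M. (real ?N * e)^2 \<le> (T ?N \<omega>)^2} \<in> events"
      unfolding T_def using meas by measurable
    ultimately have "measure M (A k) \<le> measure M {\<omega> \<in> space M. (real ?N * e)^2 \<le> (T ?N \<omega>)^2}"
      by (intro finite_measure_mono)
    also have "\<dots> \<le> (\<integral>\<omega>. (T ?N \<omega>)^2 \<partial>M) / (real ?N * e)^2"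
    proof (rule integral_Markov_inequality_measure[where A="space M"])
      show "integrable M (\<lambda>\<omega>. (T ?N \<omega>)^2)" unfolding T_def by (rule smb(2))
      show "space M \<in> events" by simp
      show "AE x in M. 0 \<le> (T ?N x)^2" by simp
      show "0 < (real ?N * e)^2" using e0 by simp
    qed
    also have "\<dots> \<le> (real ?N * B) / (real ?N * e)^2"
      using smb(1)[of ?N] unfolding T_def B_def by (intro divide_right_mono) auto
    also have "\<dots> = B / e^2 * inverse (real ?N)"
      using frac_aux[of "real ?N" e B] e0 by simp
    also have "\<dots> = B / e^2 * inverse (real (Suc k) ^ 2)" by simp
    finally show ?thesis .
  qed
  have summ: "summable (\<lambda>k. measure M (A k))"
  proof (rule summable_comparison_test'[where g="\<lambda>k. B / e^2 * inverse (real (Suc k) ^ 2)"])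
    have "summable (\<lambda>k. inverse (real k ^ 2))" by (rule inverse_power_summable) simp
    then have "summable (\<lambda>k. inverse (real (Suc k) ^ 2))" by (subst summable_Suc_iff)
    then show "summable (\<lambda>k. B / e^2 * inverse (real (Suc k) ^ 2))" by (rule summable_mult)
    show "norm (measure M (A k)) \<le> B / e\<^sup>2 * inverse (real (Suc k) ^ 2)" for k
      using Ale[of k] by simp
  qed
  have "AE \<omega> in M. eventually (\<lambda>k. \<omega> \<in> space M - A k) sequentially"
    by (rule borel_cantelli_AE1[OF Ameas _ summ]) (simp add: less_top[symmetric])
  then show ?thesis
  proof (rule AE_mp, intro AE_I2 impI)
    fix \<omega> assume \<omega>: "\<omega> \<in> space M" and ev: "eventually (\<lambda>k. \<omega> \<in> space M - A k) sequentially"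
    then obtain K0 where K0: "\<And>k. k \<ge> K0 \<Longrightarrow> \<omega> \<notin> A k" by (auto simp: eventually_sequentially)
    have K0': "(\<Sum>i<(Suc k)^2. v i \<omega>) \<le> real (Suc k)^2 * (\<mu> + e)" if "k \<ge> K0" for k
    proof -
      have "T ((Suc k)^2) \<omega> < real (Suc k)^2 * e" using K0[OF that] \<omega> unfolding A_def by auto
      moreover have "T ((Suc k)^2) \<omega> = (\<Sum>i<(Suc k)^2. v i \<omega>) - real (Suc k)^2 * \<mu>"
        unfolding T_def by (simp add: sum_subtractf)
      ultimately show ?thesis by (simp add: algebra_simps)
    qed
    define K1 where "K1 = nat \<lceil>3 * (\<mu> + e) / e\<rceil> + 1"
    define K where "K = max K0 K1"
    show "eventually (\<lambda>n. (\<Sum>i<n. v i \<omega>) \<le> real n * (\<mu> + \<epsilon>)) sequentially"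
      unfolding eventually_sequentially
    proof (intro exI[of _ "(Suc K)^2"] allI impI)
      fix n assume n: "(Suc K)^2 \<le> n"
      obtain k where k: "k^2 \<le> n" "n < (Suc k)^2" using exists_sqrt_bracket by blast
      have kK: "K \<le> k"
      proof (rule ccontr)
        assume "\<not> K \<le> k"
        then have "Suc k \<le> K" by simp
        then have "(Suc k)^2 \<le> K^2" by (rule power_mono) auto
        also have "\<dots> \<le> (Suc K)^2" by (rule power_mono) auto
        finally have "(Suc k)^2 \<le> (Suc K)^2" .
        then show False using n k by linarith
      qed
      have "(\<Sum>i<n. v i \<omega>) \<le> (\<Sum>i<(Suc k)^2. v i \<omega>)"
        using k nonneg by (intro sum_mono2) auto
      also have "\<dots> \<le> real (Suc k)^2 * (\<mu> + e)" using K0'[of k] kK by (simp add: K_def)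
      also have "\<dots> \<le> real k ^2 * (\<mu> + 2 * e)"
      proof (rule sq_interp_arith[OF mu0 e0])
        have "3 * (\<mu> + e) / e \<le> real (nat \<lceil>3 * (\<mu> + e) / e\<rceil>)" by linarith
        then show "3 * (\<mu> + e) / e \<le> real k" using kK unfolding K_def K1_def by linarith
        show "1 \<le> k" using kK unfolding K_def K1_def by linarith
      qed
      also have "\<dots> \<le> real n * (\<mu> + \<epsilon>)"
      proof -
        have "real k ^2 \<le> real n" using k(1) by (metis of_nat_le_iff of_nat_power)
        moreover have "\<mu> + 2 * e = \<mu> + \<epsilon>" by (simp add: e_def)
        ultimately show ?thesis using mu0 eps by (simp add: mult_right_mono)
      qed
      finally show "(\<Sum>i<n. v i \<omega>) \<le> real n * (\<mu> + \<epsilon>)" .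
    qed
  qed
qed


locale iid_seq = prob_space M for M :: "'a measure" +
  fixes Z :: "int \<Rightarrow> 'a \<Rightarrow> real"
  assumes indep: "indep_vars (\<lambda>_. borel) Z UNIV"
    and ident: "\<And>t. distr M borel (Z t) = distr M borel (Z 0)"
begin

lemma Z_meas[measurable]: "Z t \<in> borel_measurable M"
  using indep unfolding indep_vars_def by auto

definition win :: "nat \<Rightarrow> int \<Rightarrow> 'a \<Rightarrow> (nat \<Rightarrow> real)" where
  "win m i \<omega> = (\<lambda>k\<in>{..m}. Z (i - int k) \<omega>)"

lemma win_meas[measurable]: "win m i \<in> measurable M (PiM {..m} (\<lambda>_. borel))"
  unfolding win_def by measurable

lemma win_distr: "distr M (PiM {..m} (\<lambda>_. borel)) (win m i) = PiM {..m} (\<lambda>_. distr M borel (Z 0))"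
proof -
  let ?P = "PiM (UNIV::int set) (\<lambda>_. borel :: real measure)"
  let ?X = "\<lambda>\<omega>. \<lambda>j\<in>(UNIV::int set). Z j \<omega>"
  let ?g = "\<lambda>\<omega>'. \<lambda>n\<in>{..m}. \<omega>' (i - int n)"
  have D: "distr M ?P ?X = PiM UNIV (\<lambda>j. distr M borel (Z j))"
    using indep_vars_iff_distr_eq_PiM[where I=UNIV and M'="\<lambda>_. borel" and X=Z] indep by simp
  have Xm: "?X \<in> measurable M ?P" by measurable
  have gm: "?g \<in> measurable ?P (PiM {..m} (\<lambda>_. borel))" by measurable
  have "distr M (PiM {..m} (\<lambda>_. borel)) (win m i) = distr (distr M ?P ?X) (PiM {..m} (\<lambda>_. borel)) ?g"
    by (subst distr_distr[OF gm Xm]) (auto simp: win_def comp_def intro!: distr_cong)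
  also have "\<dots> = distr (PiM UNIV (\<lambda>j. distr M borel (Z j))) (PiM {..m} (\<lambda>n. distr M borel (Z (i - int n)))) ?g"
    unfolding D by (intro distr_cong) (auto intro!: sets_PiM_cong)
  also have "\<dots> = PiM {..m} (\<lambda>n. distr M borel (Z (i - int n)))"
    by (rule distr_PiM_reindex) (auto simp: inj_on_def prob_space_distr)
  also have "\<dots> = PiM {..m} (\<lambda>_. distr M borel (Z 0))"
    by (intro PiM_cong) (rule refl, rule ident)
  finally show ?thesis .
qed

lemma win_integral:
  fixes F :: "(nat \<Rightarrow> real) \<Rightarrow> real"
  assumes [measurable]: "F \<in> borel_measurable (PiM {..m} (\<lambda>_. borel))"
  shows "(\<integral>\<omega>. F (win m i \<omega>) \<partial>M) = (\<integral>\<omega>. F (win m 0 \<omega>) \<partial>M)"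
  using integral_distr[OF win_meas[of m i] assms] integral_distr[OF win_meas[of m 0] assms]
  by (simp add: win_distr)

lemma win_integrable:
  fixes F :: "(nat \<Rightarrow> real) \<Rightarrow> real"
  assumes [measurable]: "F \<in> borel_measurable (PiM {..m} (\<lambda>_. borel))"
  shows "integrable M (\<lambda>\<omega>. F (win m i \<omega>)) = integrable M (\<lambda>\<omega>. F (win m 0 \<omega>))"
  using integrable_distr_eq[OF win_meas[of m i] assms] integrable_distr_eq[OF win_meas[of m 0] assms]
  by (simp add: win_distr)

lemma win_indep:
  fixes F :: "(nat \<Rightarrow> real) \<Rightarrow> real"
  assumes [measurable]: "F \<in> borel_measurable (PiM {..m} (\<lambda>_. borel))"
    and ij: "i + int m < j"
  shows "indep_var borel (\<lambda>\<omega>. F (win m i \<omega>)) borel (\<lambda>\<omega>. F (win m j \<omega>))"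
proof -
  define A where "A = {i - int m..i}"
  define B where "B = {j - int m..j}"
  have AB: "A \<inter> B = {}" using ij by (auto simp: A_def B_def)
  have ind: "indep_var (PiM A (\<lambda>_. borel)) (\<lambda>\<omega>. restrict (\<lambda>t. Z t \<omega>) A)
                       (PiM B (\<lambda>_. borel)) (\<lambda>\<omega>. restrict (\<lambda>t. Z t \<omega>) B)"
    by (rule indep_var_restrict[OF indep AB]) auto
  define gA where "gA = (\<lambda>\<omega>'. F (\<lambda>n\<in>{..m}. \<omega>' (i - int n)))"
  define gB where "gB = (\<lambda>\<omega>'. F (\<lambda>n\<in>{..m}. \<omega>' (j - int n)))"
  have gAm: "gA \<in> borel_measurable (PiM A (\<lambda>_. borel))"
    unfolding gA_def
    by (rule measurable_compose[OF _ assms(1)], rule measurable_restrict)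
       (auto simp: A_def intro!: measurable_component_singleton)
  have gBm: "gB \<in> borel_measurable (PiM B (\<lambda>_. borel))"
    unfolding gB_def
    by (rule measurable_compose[OF _ assms(1)], rule measurable_restrict)
       (auto simp: B_def intro!: measurable_component_singleton)
  have "indep_var borel (gA \<circ> (\<lambda>\<omega>. restrict (\<lambda>t. Z t \<omega>) A)) borel (gB \<circ> (\<lambda>\<omega>. restrict (\<lambda>t. Z t \<omega>) B))"
    by (rule indep_var_compose[OF ind gAm gBm])
  moreover have "gA \<circ> (\<lambda>\<omega>. restrict (\<lambda>t. Z t \<omega>) A) = (\<lambda>\<omega>. F (win m i \<omega>))"
    unfolding gA_def win_def A_def comp_def
    by (intro ext arg_cong[where f=F]) (auto simp: restrict_def)
  moreover have "gB \<circ> (\<lambda>\<omega>. restrict (\<lambda>t. Z t \<omega>) B) = (\<lambda>\<omega>. F (win m j \<omega>))"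
    unfolding gB_def win_def B_def comp_def
    by (intro ext arg_cong[where f=F]) (auto simp: restrict_def)
  ultimately show ?thesis by simp
qed

lemma slln_window:
  fixes F :: "(nat \<Rightarrow> real) \<Rightarrow> real"
  assumes Fm[measurable]: "F \<in> borel_measurable (PiM {..m} (\<lambda>_. borel))"
    and F0: "\<And>x. 0 \<le> F x"
    and F2: "integrable M (\<lambda>\<omega>. (F (win m 0 \<omega>))^2)"
    and eps: "0 < \<epsilon>"
  shows "AE \<omega> in M. eventually (\<lambda>n. (\<Sum>i<n. F (win m (int i) \<omega>)) \<le> real n * ((\<integral>\<omega>. F (win m 0 \<omega>) \<partial>M) + \<epsilon>)) sequentially"
proof -
  let ?\<mu> = "(\<integral>\<omega>. F (win m 0 \<omega>) \<partial>M)"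
  let ?C = "(\<integral>\<omega>. (F (win m 0 \<omega>))^2 \<partial>M)"
  have F2m: "(\<lambda>x. (F x)^2) \<in> borel_measurable (PiM {..m} (\<lambda>_. borel))" by measurable
  have int2: "integrable M (\<lambda>\<omega>. (F (win m i \<omega>))^2)" for i
    using win_integrable[OF F2m, of i] F2 by simp
  have int1: "integrable M (\<lambda>\<omega>. F (win m i \<omega>))" for i
    by (rule square_integrable_imp_integrable[OF _ int2]) measurable
  show ?thesis
  proof (rule slln_upper[where v="\<lambda>i \<omega>. F (win m (int i) \<omega>)" and m=m and C="?C"])
    show "(\<lambda>\<omega>. F (win m (int i) \<omega>)) \<in> borel_measurable M" for i by measurable
    show "0 \<le> F (win m (int i) \<omega>)" for i \<omega> by (rule F0)
    show "integrable M (\<lambda>\<omega>. (F (win m (int i) \<omega>))^2)" for i by (rule int2)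
    show "(\<integral>\<omega>. F (win m (int i) \<omega>) \<partial>M) = ?\<mu>" for i by (rule win_integral[OF Fm])
    show "(\<integral>\<omega>. (F (win m (int i) \<omega>))^2 \<partial>M) \<le> ?C" for i using win_integral[OF F2m, of "int i"] by simp
    show "(\<integral>\<omega>. F (win m (int i) \<omega>) * F (win m (int j) \<omega>) \<partial>M) = ?\<mu>^2" if "i + m < j" for i j
    proof -
      have "indep_var borel (\<lambda>\<omega>. F (win m (int i) \<omega>)) borel (\<lambda>\<omega>. F (win m (int j) \<omega>))"
        by (rule win_indep[OF Fm]) (use that in simp)
      then have "(\<integral>\<omega>. F (win m (int i) \<omega>) * F (win m (int j) \<omega>) \<partial>M)
          = (\<integral>\<omega>. F (win m (int i) \<omega>) \<partial>M) * (\<integral>\<omega>. F (win m (int j) \<omega>) \<partial>M)"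
        by (rule indep_var_lebesgue_integral[OF _ int1 int1])
      then show ?thesis using win_integral[OF Fm, of "int i"] win_integral[OF Fm, of "int j"]
        by (simp add: power2_eq_square)
    qed
  qed (rule eps)
qed

end


lemma one_minus_exp_le: "1 - exp (- z) \<le> (z::real)"
  using exp_ge_add_one_self[of "-z"] by simp

lemma contr_le:
  fixes \<beta> C a x y :: real
  assumes "0 \<le> \<beta>" "0 \<le> C" "a \<le> x" "x \<le> y"
  shows "\<bar>(\<beta> * x + C * exp (- x / 2)) - (\<beta> * y + C * exp (- y / 2))\<bar>
     \<le> max \<beta> (C * exp (- a / 2) / 2 - \<beta>) * \<bar>x - y\<bar>"
proof -
  define d where "d = exp (- x / 2) - exp (- y / 2)"
  have d0: "0 \<le> d" using assms by (simp add: d_def)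
  have "d = exp (- x / 2) * (1 - exp (- ((y - x) / 2)))"
    by (simp add: d_def algebra_simps flip: exp_add)
  also have "\<dots> \<le> exp (- x / 2) * ((y - x) / 2)"
    by (intro mult_left_mono one_minus_exp_le) auto
  also have "\<dots> \<le> exp (- a / 2) * ((y - x) / 2)"
    using assms by (intro mult_right_mono) auto
  finally have d1: "d \<le> exp (- a / 2) * ((y - x) / 2)" .
  define Q where "Q = C * exp (- a / 2) / 2"
  have Cd0: "0 \<le> C * d" using assms d0 by simp
  have Cd1: "C * d \<le> Q * (y - x)"
    using mult_left_mono[OF d1 assms(2)] by (simp add: Q_def algebra_simps)
  have eq: "(\<beta> * x + C * exp (- x / 2)) - (\<beta> * y + C * exp (- y / 2)) = C * d - \<beta> * (y - x)"
    by (simp add: d_def algebra_simps)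
  have "\<bar>C * d - \<beta> * (y - x)\<bar> \<le> max \<beta> (Q - \<beta>) * (y - x)"
  proof (cases "C * d \<ge> \<beta> * (y - x)")
    case True
    then have "\<bar>C * d - \<beta> * (y - x)\<bar> = C * d - \<beta> * (y - x)" by simp
    also have "\<dots> \<le> (Q - \<beta>) * (y - x)" using Cd1 by (simp add: algebra_simps)
    also have "\<dots> \<le> max \<beta> (Q - \<beta>) * (y - x)" using assms by (intro mult_right_mono) auto
    finally show ?thesis .
  next
    case False
    then have "\<bar>C * d - \<beta> * (y - x)\<bar> = \<beta> * (y - x) - C * d" by simp
    also have "\<dots> \<le> \<beta> * (y - x)" using Cd0 by simp
    also have "\<dots> \<le> max \<beta> (Q - \<beta>) * (y - x)" using assms by (intro mult_right_mono) auto
    finally show ?thesis .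
  qed
  then show ?thesis using assms unfolding eq Q_def by simp
qed

lemma contr:
  fixes \<beta> C a x y :: real
  assumes "0 \<le> \<beta>" "0 \<le> C" "a \<le> x" "a \<le> y"
  shows "\<bar>(\<beta> * x + C * exp (- x / 2)) - (\<beta> * y + C * exp (- y / 2))\<bar>
     \<le> max \<beta> (C * exp (- a / 2) / 2 - \<beta>) * \<bar>x - y\<bar>"
proof (cases "x \<le> y")
  case True then show ?thesis using contr_le[OF assms(1,2,3) True] by simp
next
  case False
  then have "y \<le> x" by simp
  from contr_le[OF assms(1,2,4) this] show ?thesis by (simp add: abs_minus_commute)
qed

lemma exp_diff_le_aux: "x \<le> y \<Longrightarrow> \<bar>exp x - exp y\<bar> \<le> exp (max x y) * \<bar>x - y\<bar>" for x y :: real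
proof -
  assume xy: "x \<le> y"
  have "\<bar>exp x - exp y\<bar> = exp y - exp x" using xy by simp
  also have "\<dots> = exp y * (1 - exp (- (y - x)))" by (simp add: algebra_simps flip: exp_add)
  also have "\<dots> \<le> exp y * (y - x)" by (intro mult_left_mono one_minus_exp_le) auto
  finally show ?thesis using xy by (simp add: max_def)
qed

lemma exp_diff_le: "\<bar>exp x - exp y\<bar> \<le> exp (max x y) * \<bar>x - y\<bar>" for x y :: real
  using exp_diff_le_aux[of x y] exp_diff_le_aux[of y x]
  by (cases "x \<le> y") (auto simp: abs_minus_commute max.commute)

lemma telescope_R:
  fixes R w :: "nat \<Rightarrow> real" and \<beta> c :: real
  assumes R0: "\<And>i. 0 \<le> R i" and rec: "\<And>i. R (Suc i) = c * w i + \<beta> * R i" and b: "\<beta> < 1"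
  shows "(\<Sum>i<n. R i) \<le> (R 0 + c * (\<Sum>i<n. w i)) / (1 - \<beta>)"
proof -
  have "(\<Sum>i<n. R (Suc i)) = c * (\<Sum>i<n. w i) + \<beta> * (\<Sum>i<n. R i)"
    by (simp add: rec sum.distrib sum_distrib_left)
  moreover have "(\<Sum>i<n. R (Suc i)) = (\<Sum>i<n. R i) + R n - R 0"
    by (induction n) auto
  ultimately have "(1 - \<beta>) * (\<Sum>i<n. R i) \<le> R 0 + c * (\<Sum>i<n. w i)"
    using R0[of n] by (simp add: algebra_simps)
  then show ?thesis using b by (simp add: field_simps)
qed

lemma aux_gr:
  fixes \<beta> P Q :: real
  assumes "0 \<le> \<beta>" "\<beta> < 1" "Q \<le> P"
  shows "P + \<beta> * (Q / (1 - \<beta>)) \<le> P / (1 - \<beta>)"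
proof -
  have "0 \<le> \<beta> * (P - Q) / (1 - \<beta>)" using assms by simp
  moreover have "P / (1 - \<beta>) - (P + \<beta> * (Q / (1 - \<beta>))) = \<beta> * (P - Q) / (1 - \<beta>)"
  proof -
    have nz: "1 - \<beta> \<noteq> 0" using assms by simp
    have "P = P * (1 - \<beta>) / (1 - \<beta>)" using nz by simp
    then have "P / (1 - \<beta>) - (P + \<beta> * (Q / (1 - \<beta>))) = P / (1 - \<beta>) - (P * (1 - \<beta>) / (1 - \<beta>) + \<beta> * Q / (1 - \<beta>))"
      by simp
    also have "\<dots> = (P - P * (1 - \<beta>) - \<beta> * Q) / (1 - \<beta>)" by (simp add: diff_divide_distrib add_divide_distrib)
    also have "\<dots> = \<beta> * (P - Q) / (1 - \<beta>)" by (simp add: algebra_simps)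
    finally show ?thesis .
  qed
  ultimately show ?thesis by linarith
qed

lemma growth_S:
  fixes S w :: "nat \<Rightarrow> real" and \<beta> c K :: real
  assumes rec: "\<And>t. S (Suc t) = w t + \<beta> * S t" and wb: "\<And>t. w t \<le> K + c * t"
    and b: "0 \<le> \<beta>" "\<beta> < 1" and c: "0 \<le> c" "0 \<le> K" and S0: "0 \<le> S 0"
  shows "S t \<le> S 0 + (K + c * t) / (1 - \<beta>)"
proof (induction t)
  case 0 then show ?case using b c by simp
next
  case (Suc t)
  have "S (Suc t) \<le> (K + c * Suc t) + \<beta> * (S 0 + (K + c * t) / (1 - \<beta>))"
  proof -
    have "c * t \<le> c * Suc t" using c by (intro mult_left_mono) auto
    then have "w t \<le> K + c * Suc t" using wb[of t] by linarith
    moreover have "\<beta> * S t \<le> \<beta> * (S 0 + (K + c * t) / (1 - \<beta>))" using mult_left_mono[OF Suc b(1)] .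
    ultimately show ?thesis using rec[of t] by linarith
  qed
  also have "\<dots> \<le> S 0 + (K + c * Suc t) / (1 - \<beta>)"
  proof -
    have "\<beta> * S 0 \<le> S 0" using b S0 by (simp add: mult_left_le_one_le)
    moreover have "\<beta> * (K + c * t) \<le> \<beta> * (K + c * Suc t)" using b c by (intro mult_left_mono) (auto intro!: mult_left_mono)
    moreover have "(K + c * Suc t) + \<beta> * ((K + c * t) / (1 - \<beta>)) \<le> (K + c * Suc t) / (1 - \<beta>)"
      by (rule aux_gr) (use b c in \<open>auto intro!: mult_left_mono\<close>)
    ultimately show ?thesis by (simp add: algebra_simps)
  qed
  finally show ?case .
qed

lemma lam_tail:
  fixes \<beta> A R e :: real
  assumes "0 \<le> \<beta>" "0 \<le> R" "0 < e"
  shows "max (max \<beta> (A * exp (R / 2) - \<beta>)) e \<le> max (max \<beta> (A - \<beta>)) e * exp R"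
proof -
  define E where "E = exp (R / 2)"
  define Mx where "Mx = max (max \<beta> (A - \<beta>)) e"
  have E1: "1 \<le> E" using assms by (simp add: E_def)
  have ER: "exp R = E * E" by (simp add: E_def flip: exp_add)
  have M0: "0 \<le> Mx" using assms by (simp add: Mx_def)
  have EE: "1 \<le> E * E" using E1 mult_mono[OF E1 E1] by simp
  have MxE: "Mx \<le> Mx * (E * E)" using mult_left_mono[OF EE M0] by simp
  have "\<beta> \<le> Mx" "e \<le> Mx" "A - \<beta> \<le> Mx" by (auto simp: Mx_def)
  have "A * E - \<beta> \<le> Mx * (E * E)"
  proof -
    have "A * E - \<beta> = E * (A - \<beta>) + \<beta> * (E - 1)" by (simp add: algebra_simps)
    also have "\<dots> \<le> E * Mx + Mx * (E - 1)"
      using E1 \<open>A - \<beta> \<le> Mx\<close> \<open>\<beta> \<le> Mx\<close> by (intro add_mono mult_left_mono mult_right_mono) auto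
    also have "\<dots> \<le> Mx * (E * E)"
    proof -
      have "0 \<le> Mx * ((E - 1) * (E - 1))" using M0 by simp
      then show ?thesis by (simp add: algebra_simps)
    qed
    finally show ?thesis .
  qed
  then show ?thesis using MxE \<open>\<beta> \<le> Mx\<close> \<open>e \<le> Mx\<close> unfolding ER
    by (simp add: E_def Mx_def[symmetric])
qed

lemma ln_lam_tail:
  fixes \<beta> A R L :: real
  assumes "0 \<le> \<beta>" "0 \<le> R"
  shows "ln (max (max \<beta> (A * exp (R / 2) - \<beta>)) (exp (- L))) \<le> ln (max (max \<beta> (A - \<beta>)) (exp (- L))) + R"
proof -
  have p: "0 < max (max \<beta> (A - \<beta>)) (exp (- L))" by (simp add: max.strict_coboundedI2)
  have "ln (max (max \<beta> (A * exp (R / 2) - \<beta>)) (exp (- L))) \<le> ln (max (max \<beta> (A - \<beta>)) (exp (- L)) * exp R)"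
    using lam_tail[OF assms, of "exp (-L)" A] p by (subst ln_le_cancel_iff) (auto simp: max.strict_coboundedI2)
  also have "\<dots> = ln (max (max \<beta> (A - \<beta>)) (exp (- L))) + R"
    using p by (simp add: ln_mult)
  finally show ?thesis .
qed


lemma SUP_min_nat_ennreal: "(SUP n. min x (ennreal (real n))) = (x::ennreal)"
proof (rule antisym)
  show "(SUP n. min x (ennreal (real n))) \<le> x" by (rule SUP_least) simp
  show "x \<le> (SUP n. min x (ennreal (real n)))"
  proof (cases "x = \<top>")
    case True
    have "ennreal (real n) \<le> (SUP n. min x (ennreal (real n)))" for n
      using True by (intro SUP_upper2[of n]) auto
    then have "(SUP n. ennreal (real n)) \<le> (SUP n. min x (ennreal (real n)))"
      by (intro SUP_least) auto
    moreover have "(SUP n. ennreal (real n)) = \<top>"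
      using ennreal_SUP_of_nat_eq_top by (simp add: ennreal_of_nat_eq_real_of_nat)
    ultimately show ?thesis using True by (simp add: top_unique)
  next
    case False
    then obtain r where r: "x = ennreal r" "0 \<le> r" by (cases x) auto
    obtain n where n: "r \<le> real n" using real_arch_simple by blast
    have "x = min x (ennreal (real n))" using r n by (simp add: min_def ennreal_le_iff)
    also have "\<dots> \<le> (SUP n. min x (ennreal (real n)))" by (rule SUP_upper) simp
    finally show ?thesis .
  qed
qed

lemma (in prob_space) cond_trunc:
  fixes Y :: "'a \<Rightarrow> real"
  assumes Ym[measurable]: "Y \<in> borel_measurable M" and cond: "expect_log_neg M Y"
  shows "\<exists>L \<eta>. 0 \<le> L \<and> 0 < \<eta> \<and> (\<forall>K\<ge>0. integrable M (\<lambda>\<omega>. min (ln (max (Y \<omega>) (exp (- L)))) K)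
     \<and> (\<integral>\<omega>. min (ln (max (Y \<omega>) (exp (- L)))) K \<partial>M) \<le> - \<eta>)"
proof -
  define fp where "fp \<omega> = (if Y \<omega> > 0 then max 0 (ln (Y \<omega>)) else 0)" for \<omega>
  define gN where "gN \<omega> = (if Y \<omega> > 0 then ennreal (max 0 (- ln (Y \<omega>))) else \<infinity>)" for \<omega>
  have fpm[measurable]: "fp \<in> borel_measurable M" unfolding fp_def by measurable
  have gNm[measurable]: "gN \<in> borel_measurable M" unfolding gN_def by measurable
  have fp0: "0 \<le> fp \<omega>" for \<omega> by (simp add: fp_def)
  have hyp: "(\<integral>\<^sup>+\<omega>. ennreal (fp \<omega>) \<partial>M) < (\<integral>\<^sup>+\<omega>. gN \<omega> \<partial>M)"
  proof -
    have "(\<lambda>\<omega>. ennreal (fp \<omega>)) = (\<lambda>\<omega>. if Y \<omega> > 0 then ennreal (max 0 (ln (Y \<omega>))) else 0)"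
      by (auto simp: fp_def)
    then show ?thesis using cond unfolding expect_log_neg_def gN_def by simp
  qed
  have "(\<integral>\<^sup>+\<omega>. gN \<omega> \<partial>M) = (\<integral>\<^sup>+\<omega>. (SUP n. min (gN \<omega>) (ennreal (real n))) \<partial>M)"
    by (simp add: SUP_min_nat_ennreal)
  also have "\<dots> = (SUP n. \<integral>\<^sup>+\<omega>. min (gN \<omega>) (ennreal (real n)) \<partial>M)"
  proof (rule nn_integral_monotone_convergence_SUP)
    show "incseq (\<lambda>n \<omega>. min (gN \<omega>) (ennreal (real n)))"
      unfolding incseq_def le_fun_def
    proof (intro allI impI)
      fix m n :: nat and x assume "m \<le> n"
      then have "ennreal (real m) \<le> ennreal (real n)" by (simp add: ennreal_leI)
      then show "min (gN x) (ennreal (real m)) \<le> min (gN x) (ennreal (real n))" by (rule min.mono[OF order.refl])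
    qed
  qed measurable
  finally have "(\<integral>\<^sup>+\<omega>. ennreal (fp \<omega>) \<partial>M) < (SUP n. \<integral>\<^sup>+\<omega>. min (gN \<omega>) (ennreal (real n)) \<partial>M)"
    using hyp by simp
  then obtain n where n: "(\<integral>\<^sup>+\<omega>. ennreal (fp \<omega>) \<partial>M) < (\<integral>\<^sup>+\<omega>. min (gN \<omega>) (ennreal (real n)) \<partial>M)"
    by (auto simp: less_SUP_iff)
  define L where "L = real n"
  have L0: "0 \<le> L" by (simp add: L_def)
  define q where "q \<omega> = min (if Y \<omega> > 0 then max 0 (- ln (Y \<omega>)) else L) L" for \<omega>
  have qm[measurable]: "q \<in> borel_measurable M" unfolding q_def by measurable
  have q0: "0 \<le> q \<omega>" "q \<omega> \<le> L" for \<omega> using L0 by (auto simp: q_def)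
  have gq: "min (gN \<omega>) (ennreal (real n)) = ennreal (q \<omega>)" for \<omega>
  proof (cases "Y \<omega> > 0")
    case True then show ?thesis by (auto simp: gN_def q_def L_def min_def ennreal_le_iff)
  next
    case False
    then have "gN \<omega> = \<top>" "q \<omega> = real n" by (auto simp: gN_def q_def L_def)
    then show ?thesis using min.absorb2[OF top_greatest, of "ennreal (real n)"] by simp
  qed
  have qint: "integrable M q"
    by (rule integrable_const_bound[where B=L]) (use q0 in auto)
  have fpfin: "(\<integral>\<^sup>+\<omega>. ennreal (fp \<omega>) \<partial>M) < \<infinity>"
  proof -
    have "(\<integral>\<^sup>+\<omega>. ennreal (q \<omega>) \<partial>M) < \<infinity>"
      using nn_integral_eq_integral[OF qint] q0 by simp
    moreover have "(\<integral>\<^sup>+\<omega>. min (gN \<omega>) (ennreal (real n)) \<partial>M) = (\<integral>\<^sup>+\<omega>. ennreal (q \<omega>) \<partial>M)"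
      using gq by simp
    ultimately show ?thesis using n by simp
  qed
  have fpint: "integrable M fp"
    by (rule integrableI_nonneg) (use fp0 fpfin in auto)
  have "ennreal (\<integral>\<omega>. fp \<omega> \<partial>M) < ennreal (\<integral>\<omega>. q \<omega> \<partial>M)"
    using n gq nn_integral_eq_integral[OF qint] nn_integral_eq_integral[OF fpint] q0 fp0 by simp
  then have lt: "(\<integral>\<omega>. fp \<omega> \<partial>M) < (\<integral>\<omega>. q \<omega> \<partial>M)"
    by (meson ennreal_leI not_le)
  define \<eta> where "\<eta> = (\<integral>\<omega>. q \<omega> \<partial>M) - (\<integral>\<omega>. fp \<omega> \<partial>M)"
  have pw: "ln (max (Y \<omega>) (exp (- L))) \<le> fp \<omega> - q \<omega>" for \<omega>
  proof (cases "Y \<omega> > 0")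
    case True
    show ?thesis
    proof (cases "Y \<omega> \<ge> exp (- L)")
      case True2: True
      then have "ln (Y \<omega>) \<ge> - L" using True ln_le_cancel_iff[of "exp (-L)" "Y \<omega>"] by simp
      then have "q \<omega> = max 0 (- ln (Y \<omega>))" using True L0 by (auto simp: q_def)
      moreover have "max (Y \<omega>) (exp (- L)) = Y \<omega>" using True2 by simp
      ultimately show ?thesis using True by (auto simp: fp_def max_def)
    next
      case False
      then have "ln (Y \<omega>) < - L" using True ln_less_cancel_iff[of "Y \<omega>" "exp (-L)"] by simp
      then have "q \<omega> = L" "fp \<omega> = 0" using True L0 by (auto simp: q_def fp_def)
      moreover have "max (Y \<omega>) (exp (- L)) = exp (- L)" using False by simp
      ultimately show ?thesis by simp
    qed
  next
    case False
    then have "q \<omega> = L" "fp \<omega> = 0" by (auto simp: q_def fp_def)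
    moreover have "max (Y \<omega>) (exp (- L)) = exp (- L)"
    proof -
      have "Y \<omega> \<le> exp (- L)" using False exp_gt_zero[of "- L"] by linarith
      then show ?thesis by (simp add: max_def)
    qed
    ultimately show ?thesis by simp
  qed
  have eta0: "0 < \<eta>" using lt by (simp add: \<eta>_def)
  have main: "\<forall>K\<ge>0. integrable M (\<lambda>\<omega>. min (ln (max (Y \<omega>) (exp (- L)))) K)
     \<and> (\<integral>\<omega>. min (ln (max (Y \<omega>) (exp (- L)))) K \<partial>M) \<le> - \<eta>"
  proof (intro allI impI conjI)
    fix K :: real assume K: "0 \<le> K"
    have lb: "- L \<le> ln (max (Y \<omega>) (exp (- L)))" for \<omega>
    proof -
      have "ln (exp (- L)) \<le> ln (max (Y \<omega>) (exp (- L)))"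
        by (subst ln_le_cancel_iff) (auto simp: max.strict_coboundedI2)
      then show ?thesis by simp
    qed
    show int: "integrable M (\<lambda>\<omega>. min (ln (max (Y \<omega>) (exp (- L)))) K)"
    proof (rule integrable_const_bound[where B="L + K"])
      show "AE x in M. norm (min (ln (max (Y x) (exp (- L)))) K) \<le> L + K"
      proof (intro AE_I2)
        fix x
        have "- L \<le> ln (max (Y x) (exp (- L)))" by (rule lb)
        then show "norm (min (ln (max (Y x) (exp (- L)))) K) \<le> L + K"
          using L0 K by (simp add: abs_le_iff min_def)
      qed
    qed measurable
    have "(\<integral>\<omega>. min (ln (max (Y \<omega>) (exp (- L)))) K \<partial>M) \<le> (\<integral>\<omega>. fp \<omega> - q \<omega> \<partial>M)"
    proof (rule integral_mono[OF int])
      show "integrable M (\<lambda>\<omega>. fp \<omega> - q \<omega>)" using fpint qint by simp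
      fix \<omega> show "min (ln (max (Y \<omega>) (exp (- L)))) K \<le> fp \<omega> - q \<omega>"
        using pw[of \<omega>] by (rule min.coboundedI1)
    qed
    also have "\<dots> = - \<eta>" using fpint qint by (simp add: \<eta>_def)
    finally show "(\<integral>\<omega>. min (ln (max (Y \<omega>) (exp (- L)))) K \<partial>M) \<le> - \<eta>" .
  qed
  show ?thesis using L0 eta0 main by blast
qed


locale egarch = iid_seq M Z for M :: "'a measure" and Z :: "int \<Rightarrow> 'a \<Rightarrow> real" +
  fixes \<alpha> \<beta> \<gamma> \<delta> :: real
  assumes beta0: "0 \<le> \<beta>" and beta1: "\<beta> < 1" and delta: "\<bar>\<gamma>\<bar> \<le> \<delta>"
    and Zint2: "integrable M (\<lambda>\<omega>. (Z 0 \<omega>)^2)"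
begin

definition wf :: "real \<Rightarrow> real" where "wf z = \<gamma> * z + \<delta> * \<bar>z\<bar>"
definition w :: "int \<Rightarrow> 'a \<Rightarrow> real" where "w j \<omega> = wf (Z j \<omega>)"
definition S :: "int \<Rightarrow> 'a \<Rightarrow> real" where "S t \<omega> = (\<Sum>k. \<beta> ^ k * w (t - 1 - int k) \<omega>)"
definition g :: real where "g = \<bar>\<gamma>\<bar> + \<delta>"

lemma wf_meas[measurable]: "wf \<in> borel_measurable borel"
  unfolding wf_def by measurable

lemma w_meas[measurable]: "w j \<in> borel_measurable M"
  unfolding w_def by measurable

lemma wf_nonneg: "0 \<le> wf z"
proof -
  have "- (\<gamma> * z) \<le> \<bar>\<gamma>\<bar> * \<bar>z\<bar>" by (metis abs_ge_minus_self abs_mult)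
  also have "\<dots> \<le> \<delta> * \<bar>z\<bar>" using delta by (intro mult_right_mono) auto
  finally show ?thesis by (simp add: wf_def)
qed

lemma w_nonneg: "0 \<le> w j \<omega>" by (simp add: w_def wf_nonneg)

lemma g0: "0 \<le> g" unfolding g_def using delta abs_ge_zero[of \<gamma>] by linarith

lemma wf_le: "wf z \<le> g * \<bar>z\<bar>"
proof -
  have "\<gamma> * z \<le> \<bar>\<gamma>\<bar> * \<bar>z\<bar>" by (metis abs_ge_self abs_mult)
  then show ?thesis by (simp add: wf_def g_def algebra_simps)
qed

lemma wf_sq_le: "(wf z)^2 \<le> g^2 * z^2"
proof -
  have "(wf z)^2 \<le> (g * \<bar>z\<bar>)^2" using wf_le wf_nonneg by (intro power_mono) auto
  then show ?thesis by (simp add: power_mult_distrib)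
qed

lemma Z_shift_integrable:
  fixes h :: "real \<Rightarrow> real"
  assumes [measurable]: "h \<in> borel_measurable borel"
  shows "integrable M (\<lambda>\<omega>. h (Z t \<omega>)) = integrable M (\<lambda>\<omega>. h (Z 0 \<omega>))"
  using integrable_distr_eq[OF Z_meas assms, of t] integrable_distr_eq[OF Z_meas assms, of 0]
  by (simp add: ident[of t])

lemma Z_shift_integral:
  fixes h :: "real \<Rightarrow> real"
  assumes [measurable]: "h \<in> borel_measurable borel"
  shows "(\<integral>\<omega>. h (Z t \<omega>) \<partial>M) = (\<integral>\<omega>. h (Z 0 \<omega>) \<partial>M)"
  using integral_distr[OF Z_meas assms, of t] integral_distr[OF Z_meas assms, of 0]
  by (simp add: ident[of t])

lemma Z2_int: "integrable M (\<lambda>\<omega>. (Z t \<omega>)^2)"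
  using Z_shift_integrable[of "\<lambda>z. z^2" t] Zint2 by simp

lemma w2_int: "integrable M (\<lambda>\<omega>. (w t \<omega>)^2)"
proof (rule Bochner_Integration.integrable_bound[where f="\<lambda>\<omega>. g^2 * (Z t \<omega>)^2"])
  show "integrable M (\<lambda>\<omega>. g^2 * (Z t \<omega>)^2)" using Z2_int by simp
  show "(\<lambda>\<omega>. (w t \<omega>)^2) \<in> borel_measurable M" by measurable
  show "AE x in M. norm ((w t x)^2) \<le> norm (g^2 * (Z t x)^2)"
    using wf_sq_le by (intro AE_I2) (simp add: w_def)
qed

lemma w_int: "integrable M (w t)"
  by (rule square_integrable_imp_integrable[OF w_meas w2_int])

definition \<mu>w :: real where "\<mu>w = (\<integral>\<omega>. w 0 \<omega> \<partial>M)"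
definition W2 :: real where "W2 = (\<integral>\<omega>. (w 0 \<omega>)^2 \<partial>M)"

lemma w_mean: "(\<integral>\<omega>. w t \<omega> \<partial>M) = \<mu>w"
  unfolding \<mu>w_def w_def by (rule Z_shift_integral) measurable

lemma w2_mean: "(\<integral>\<omega>. (w t \<omega>)^2 \<partial>M) = W2"
  unfolding W2_def w_def using Z_shift_integral[of "\<lambda>z. (wf z)^2" t] by simp

lemma \<mu>w0: "0 \<le> \<mu>w"
  unfolding \<mu>w_def by (rule Bochner_Integration.integral_nonneg) (simp add: w_nonneg)

lemma W20: "0 \<le> W2"
  unfolding W2_def by (rule Bochner_Integration.integral_nonneg) simp

lemma summable_AE: "AE \<omega> in M. \<forall>t. summable (\<lambda>k. \<beta> ^ k * w (t - 1 - int k) \<omega>)"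
proof (subst AE_all_countable, intro allI)
  fix t :: int
  let ?f = "\<lambda>k \<omega>. ennreal (\<beta> ^ k * w (t - 1 - int k) \<omega>)"
  have "(\<integral>\<^sup>+\<omega>. (\<Sum>k. ?f k \<omega>) \<partial>M) = (\<Sum>k. \<integral>\<^sup>+\<omega>. ?f k \<omega> \<partial>M)"
    by (rule nn_integral_suminf) measurable
  also have "\<dots> = (\<Sum>k. ennreal (\<beta> ^ k * \<mu>w))"
  proof (intro suminf_cong)
    fix k
    have "(\<integral>\<^sup>+\<omega>. ?f k \<omega> \<partial>M) = ennreal (\<integral>\<omega>. \<beta> ^ k * w (t - 1 - int k) \<omega> \<partial>M)"
      by (rule nn_integral_eq_integral) (use w_int beta0 w_nonneg in auto)
    also have "\<dots> = ennreal (\<beta> ^ k * \<mu>w)" by (simp add: w_mean)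
    finally show "(\<integral>\<^sup>+\<omega>. ?f k \<omega> \<partial>M) = ennreal (\<beta> ^ k * \<mu>w)" .
  qed
  also have "\<dots> = ennreal (\<mu>w / (1 - \<beta>))"
  proof (rule suminf_ennreal_eq)
    show "0 \<le> \<beta> ^ k * \<mu>w" for k using beta0 \<mu>w0 by simp
    have "(\<lambda>k. \<beta> ^ k) sums (1 / (1 - \<beta>))" using geometric_sums[of \<beta>] beta0 beta1 by simp
    then have "(\<lambda>k. \<beta> ^ k * \<mu>w) sums (1 / (1 - \<beta>) * \<mu>w)" by (rule sums_mult2)
    then show "(\<lambda>k. \<beta> ^ k * \<mu>w) sums (\<mu>w / (1 - \<beta>))" by simp
  qed
  finally have "(\<integral>\<^sup>+\<omega>. (\<Sum>k. ?f k \<omega>) \<partial>M) \<noteq> \<infinity>" by simp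
  then have "AE \<omega> in M. (\<Sum>k. ?f k \<omega>) \<noteq> \<infinity>"
    by (intro nn_integral_PInf_AE) measurable
  then show "AE \<omega> in M. summable (\<lambda>k. \<beta> ^ k * w (t - 1 - int k) \<omega>)"
    by (rule AE_mp) (auto intro!: AE_I2 summable_suminf_not_top simp: beta0 w_nonneg)
qed

end


context egarch
begin

definition Lm :: "nat \<Rightarrow> (nat \<Rightarrow> real) \<Rightarrow> real" where
  "Lm m x = max \<beta> ((1/2) * exp ((1/2) * (\<Sum>k<m. \<beta> ^ k * wf (x (Suc k)))) * wf (x 0) - \<beta>)"
definition ell :: "real \<Rightarrow> real \<Rightarrow> real" where "ell L y = ln (max y (exp (- L)))"
definition A0 :: real where "A0 = 1/2 + 1 / (2 * (1 - \<beta>))"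
definition Lam :: "int \<Rightarrow> 'a \<Rightarrow> real" where
  "Lam t \<omega> = max \<beta> ((1/2) * exp ((1/2) * S t \<omega>) * w t \<omega> - \<beta>)"

lemma geo_le: "(\<Sum>k<m. \<beta> ^ k) \<le> 1 / (1 - \<beta>)"
proof -
  have s: "(\<lambda>k. \<beta> ^ k) sums (1 / (1 - \<beta>))" using geometric_sums[of \<beta>] beta0 beta1 by simp
  have "(\<Sum>k<m. \<beta> ^ k) \<le> suminf (\<lambda>k. \<beta> ^ k)"
    by (rule sum_le_suminf) (use s beta0 in \<open>auto simp: sums_iff\<close>)
  then show ?thesis using s by (simp add: sums_iff)
qed

lemma ell_mono: "y \<le> y' \<Longrightarrow> ell L y \<le> ell L y'"
  unfolding ell_def by (subst ln_le_cancel_iff) (auto simp: max.strict_coboundedI2 intro: max.mono)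

lemma ell_lb: "- L \<le> ell L y"
  unfolding ell_def
  by (metis exp_gt_zero ln_exp ln_le_cancel_iff max.cobounded2 max.strict_coboundedI2)

lemma ell_Lm_ub:
  assumes L0: "0 \<le> L"
  shows "ell L (Lm m x) \<le> (1/2) * wf (x 0) + (1/2) * (\<Sum>k<m. \<beta> ^ k * wf (x (Suc k)))"
proof -
  define s where "s = (\<Sum>k<m. \<beta> ^ k * wf (x (Suc k)))"
  have s0: "0 \<le> s" unfolding s_def using beta0 wf_nonneg by (intro sum_nonneg) auto
  define y where "y = max (Lm m x) (exp (- L))"
  have y0: "0 < y" by (simp add: y_def max.strict_coboundedI2)
  have R0: "0 \<le> (1/2) * wf (x 0) + (1/2) * s" using s0 wf_nonneg[of "x 0"] by simp
  show ?thesis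
  proof (cases "y \<le> 1")
    case True
    then have "ln y \<le> 0" using y0 by simp
    then show ?thesis using R0 by (simp add: ell_def y_def[symmetric] s_def[symmetric])
  next
    case False
    have "exp (- L) \<le> 1" using L0 by simp
    then have "y = Lm m x" using False by (auto simp: y_def max_def)
    define A where "A = (1/2) * exp ((1/2) * s) * wf (x 0)"
    have LmA: "Lm m x = max \<beta> (A - \<beta>)" unfolding Lm_def A_def s_def by (rule refl)
    have yA: "y = A - \<beta>" using \<open>y = Lm m x\<close> LmA False beta1 by (auto simp: max_def split: if_splits)
    have yA': "y \<le> A" using yA beta0 by (simp add: A_def)
    have A0': "0 < A" using yA' y0 by simp
    then have w0: "0 < wf (x 0)" by (simp add: A_def zero_less_mult_iff)
    have "ln y \<le> ln A" using yA' y0 by simp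
    also have "ln A = (1/2) * s + ln ((1/2) * wf (x 0))"
    proof -
      have Aeq: "A = exp ((1/2) * s) * ((1/2) * wf (x 0))" by (simp add: A_def)
      have "ln (exp ((1/2) * s) * ((1/2) * wf (x 0))) = ln (exp ((1/2) * s)) + ln ((1/2) * wf (x 0))"
        by (rule ln_mult_pos) (use w0 in auto)
      then show ?thesis by (simp only: Aeq ln_exp)
    qed
    also have "ln ((1/2) * wf (x 0)) \<le> (1/2) * wf (x 0) - 1" using w0 by (intro ln_le_minus_one) simp
    finally have "ln y \<le> (1/2) * wf (x 0) + (1/2) * s" by simp
    then show ?thesis by (simp add: ell_def y_def[symmetric] s_def[symmetric])
  qed
qed

lemma ell_Lm_excess:
  assumes L0: "0 \<le> L" and K1: "0 \<le> K1"
  shows "max 0 (ell L (Lm m x) - A0 * K1) \<le> (1/2) * max 0 (wf (x 0) - K1) + (1/2) * (\<Sum>k<m. \<beta> ^ k * max 0 (wf (x (Suc k)) - K1))"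
proof -
  define s where "s = (\<Sum>k<m. \<beta> ^ k * wf (x (Suc k)))"
  define G where "G = (\<Sum>k<m. \<beta> ^ k)"
  have "0 \<le> (\<Sum>k<m. \<beta> ^ k * max 0 (wf (x (Suc k)) - K1))"
    by (intro sum_nonneg mult_nonneg_nonneg) (auto simp: beta0)
  then have RHS0: "0 \<le> (1/2) * max 0 (wf (x 0) - K1) + (1/2) * (\<Sum>k<m. \<beta> ^ k * max 0 (wf (x (Suc k)) - K1))"
    by simp
  have "ell L (Lm m x) - A0 * K1 \<le> (1/2) * max 0 (wf (x 0) - K1) + (1/2) * (\<Sum>k<m. \<beta> ^ k * max 0 (wf (x (Suc k)) - K1))"
  proof -
    have GA: "(1/2) * K1 * (1 + G) \<le> A0 * K1"
    proof -
      have e1: "1 / (2 * (1 - \<beta>)) = (1 / (1 - \<beta>)) / 2" by simp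
      have "(1/2) * (1 + G) = 1/2 + G / 2" by simp
      also have "\<dots> \<le> 1/2 + (1 / (1 - \<beta>)) / 2" using geo_le[of m] unfolding G_def
        by (intro add_left_mono divide_right_mono) auto
      also have "\<dots> = A0" unfolding A0_def e1 ..
      finally have "(1/2) * (1 + G) \<le> A0" .
      then show ?thesis using K1 by (metis mult.commute mult.left_commute mult_right_mono)
    qed
    have "ell L (Lm m x) - A0 * K1 \<le> (1/2) * wf (x 0) + (1/2) * s - (1/2) * K1 * (1 + G)"
      using ell_Lm_ub[OF L0, of m x] GA by (simp add: s_def)
    also have "\<dots> = (1/2) * (wf (x 0) - K1) + (1/2) * (\<Sum>k<m. \<beta> ^ k * (wf (x (Suc k)) - K1))"
      by (simp add: s_def G_def algebra_simps sum_subtractf sum_distrib_left sum_distrib_right)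
    also have "\<dots> \<le> (1/2) * max 0 (wf (x 0) - K1) + (1/2) * (\<Sum>k<m. \<beta> ^ k * max 0 (wf (x (Suc k)) - K1))"
      using beta0 by (intro add_mono mult_left_mono sum_mono) auto
    finally show ?thesis .
  qed
  then show ?thesis using RHS0 by simp
qed

lemma comp_meas: "k \<le> m \<Longrightarrow> (\<lambda>x. x k) \<in> borel_measurable (PiM {..m} (\<lambda>_. borel :: real measure))"
  by (rule measurable_component_singleton) simp

lemma Lm_meas[measurable]: "Lm m \<in> borel_measurable (PiM {..m} (\<lambda>_. borel))"
proof -
  have s: "(\<lambda>x. \<Sum>k<m. \<beta> ^ k * wf (x (Suc k))) \<in> borel_measurable (PiM {..m} (\<lambda>_. borel))"
  proof (intro borel_measurable_sum)
    fix k assume "k \<in> {..<m}"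
    then have "Suc k \<le> m" by simp
    from measurable_compose[OF comp_meas[OF this] wf_meas]
    show "(\<lambda>x. \<beta> ^ k * wf (x (Suc k))) \<in> borel_measurable (PiM {..m} (\<lambda>_. borel))" by measurable
  qed
  have w0: "(\<lambda>x. wf (x 0)) \<in> borel_measurable (PiM {..m} (\<lambda>_. borel))"
    using measurable_compose[OF comp_meas wf_meas] by simp
  show ?thesis unfolding Lm_def using s w0 by measurable
qed

lemma ell_meas[measurable]: "(\<lambda>y. ell L y) \<in> borel_measurable borel"
  unfolding ell_def by measurable

lemma win_apply: "k \<le> m \<Longrightarrow> win m i \<omega> k = Z (i - int k) \<omega>"
  by (simp add: win_def)

lemma Lm_win: "Lm m (win m i \<omega>) = max \<beta> ((1/2) * exp ((1/2) * (\<Sum>k<m. \<beta> ^ k * w (i - 1 - int k) \<omega>)) * w i \<omega> - \<beta>)"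
proof -
  have "(\<Sum>k<m. \<beta> ^ k * wf (win m i \<omega> (Suc k))) = (\<Sum>k<m. \<beta> ^ k * w (i - 1 - int k) \<omega>)"
    by (intro sum.cong) (auto simp: win_apply w_def algebra_simps)
  then show ?thesis by (simp add: Lm_def win_apply w_def)
qed

end


context egarch
begin

abbreviation summ :: "'a \<Rightarrow> bool" where
  "summ \<omega> \<equiv> (\<forall>t. summable (\<lambda>k. \<beta> ^ k * w (t - 1 - int k) \<omega>))"

lemma S_nonneg: "summ \<omega> \<Longrightarrow> 0 \<le> S t \<omega>"
  unfolding S_def by (intro suminf_nonneg) (auto simp: beta0 w_nonneg)

lemma S_rec:
  assumes "summ \<omega>"
  shows "S (t + 1) \<omega> = w t \<omega> + \<beta> * S t \<omega>"
proof -
  define f where "f k = \<beta> ^ k * w (t - int k) \<omega>" for k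
  have sf: "summable f" unfolding f_def using assms[rule_format, of "t + 1"] by simp
  have "(\<Sum>n. f (Suc n)) = suminf f - f 0" by (rule suminf_split_head[OF sf])
  moreover have "(\<Sum>n. f (Suc n)) = \<beta> * S t \<omega>"
  proof -
    have "(\<lambda>n. f (Suc n)) = (\<lambda>n. \<beta> * (\<beta> ^ n * w (t - 1 - int n) \<omega>))"
      by (auto simp: f_def algebra_simps)
    then have "(\<Sum>n. f (Suc n)) = (\<Sum>n. \<beta> * (\<beta> ^ n * w (t - 1 - int n) \<omega>))" by simp
    also have "\<dots> = \<beta> * S t \<omega>"
      unfolding S_def by (rule suminf_mult[OF assms[rule_format, of t]])
    finally show ?thesis .
  qed
  moreover have "S (t + 1) \<omega> = suminf f" unfolding S_def f_def by simp
  moreover have "f 0 = w t \<omega>" by (simp add: f_def)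
  ultimately show ?thesis by simp
qed

lemma S_split:
  assumes "summ \<omega>"
  shows "S t \<omega> = (\<Sum>k<m. \<beta> ^ k * w (t - 1 - int k) \<omega>) + \<beta> ^ m * S (t - int m) \<omega>"
proof -
  define f where "f k = \<beta> ^ k * w (t - 1 - int k) \<omega>" for k
  have sf: "summable f" unfolding f_def using assms[rule_format, of t] .
  have "suminf f = (\<Sum>n. f (n + m)) + (\<Sum>k<m. f k)" by (rule suminf_split_initial_segment[OF sf])
  moreover have "(\<Sum>n. f (n + m)) = \<beta> ^ m * S (t - int m) \<omega>"
  proof -
    have "(\<lambda>n. f (n + m)) = (\<lambda>n. \<beta> ^ m * (\<beta> ^ n * w (t - int m - 1 - int n) \<omega>))"
      by (auto simp: f_def power_add algebra_simps)
    then have "(\<Sum>n. f (n + m)) = (\<Sum>n. \<beta> ^ m * (\<beta> ^ n * w (t - int m - 1 - int n) \<omega>))" by simp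
    also have "\<dots> = \<beta> ^ m * S (t - int m) \<omega>"
      unfolding S_def by (rule suminf_mult[OF assms[rule_format, of "t - int m"]])
    finally show ?thesis .
  qed
  moreover have "S t \<omega> = suminf f" unfolding S_def f_def by simp
  ultimately show ?thesis by (simp add: f_def)
qed

lemma Lam_split:
  assumes "summ \<omega>"
  shows "ell L (Lam t \<omega>) \<le> ell L (Lm m (win m t \<omega>)) + \<beta> ^ m * S (t - int m) \<omega>"
proof -
  define P where "P = (\<Sum>k<m. \<beta> ^ k * w (t - 1 - int k) \<omega>)"
  define R where "R = \<beta> ^ m * S (t - int m) \<omega>"
  define A where "A = (1/2) * exp ((1/2) * P) * w t \<omega>"
  have R0: "0 \<le> R" unfolding R_def using S_nonneg[OF assms] beta0 by simp
  have "S t \<omega> = P + R" using S_split[OF assms, of t m] by (simp add: P_def R_def)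
  moreover have "exp ((1/2) * (P + R)) = exp ((1/2) * P) * exp (R / 2)"
  proof -
    have "(1/2) * (P + R) = (1/2) * P + R / 2" by simp
    then show ?thesis by (simp only: exp_add)
  qed
  ultimately have "(1/2) * exp ((1/2) * S t \<omega>) * w t \<omega> = A * exp (R / 2)"
    by (simp add: A_def ac_simps)
  then have "Lam t \<omega> = max \<beta> (A * exp (R / 2) - \<beta>)" by (simp add: Lam_def)
  moreover have "Lm m (win m t \<omega>) = max \<beta> (A - \<beta>)" by (simp add: Lm_win A_def P_def)
  ultimately show ?thesis
    using ln_lam_tail[OF beta0 R0, of A L] by (simp add: ell_def R_def)
qed

lemma wf_scale: "0 \<le> c \<Longrightarrow> wf (c * z) = c * wf z"
  by (simp add: wf_def abs_mult algebra_simps)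

lemma logsig_eq: "egarch_logsig \<alpha> \<beta> \<gamma> \<delta> Z t \<omega> = \<alpha> / (1 - \<beta>) + S t \<omega>"
  by (simp add: egarch_logsig_def S_def w_def wf_def)

lemma inv_arg_eq: "egarch_inv_arg \<beta> \<gamma> \<delta> Z \<omega> = Lam 0 \<omega>"
proof -
  have eqk: "\<And>k::nat. - int k - 1 = 0 - 1 - int k" by simp
  show ?thesis unfolding egarch_inv_arg_def Lam_def S_def w_def wf_def eqk by (rule refl)
qed

lemma Lam_nonneg: "0 \<le> Lam t \<omega>" using beta0 by (simp add: Lam_def)

lemma exp_ell: "Lam t \<omega> \<le> exp (ell L (Lam t \<omega>))"
  unfolding ell_def by (subst exp_ln) (auto simp: max.strict_coboundedI2)

context
  fixes s0 :: real and \<omega> :: 'a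
  assumes s0: "\<alpha> / (1 - \<beta>) \<le> s0" and sm: "summ \<omega>"
begin

abbreviation sh :: "nat \<Rightarrow> real" where "sh t \<equiv> egarch_loghat \<alpha> \<beta> \<gamma> \<delta> Z s0 t \<omega>"
abbreviation st :: "nat \<Rightarrow> real" where "st t \<equiv> egarch_logsig \<alpha> \<beta> \<gamma> \<delta> Z (int t) \<omega>"

lemma X_term: "\<gamma> * egarch_X \<alpha> \<beta> \<gamma> \<delta> Z (int t) \<omega> + \<delta> * \<bar>egarch_X \<alpha> \<beta> \<gamma> \<delta> Z (int t) \<omega>\<bar>
   = exp (st t / 2) * w (int t) \<omega>"
proof -
  have "\<gamma> * egarch_X \<alpha> \<beta> \<gamma> \<delta> Z (int t) \<omega> + \<delta> * \<bar>egarch_X \<alpha> \<beta> \<gamma> \<delta> Z (int t) \<omega>\<bar>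
      = wf (exp (st t / 2) * Z (int t) \<omega>)" by (simp add: egarch_X_def wf_def)
  also have "\<dots> = exp (st t / 2) * w (int t) \<omega>" by (simp add: wf_scale w_def)
  finally show ?thesis .
qed

lemma sh_ge: "\<alpha> / (1 - \<beta>) \<le> sh t"
proof (induction t)
  case 0 then show ?case using s0 by simp
next
  case (Suc t)
  have a: "\<alpha> + \<beta> * (\<alpha> / (1 - \<beta>)) = \<alpha> / (1 - \<beta>)" using beta1 by (simp add: field_simps)
  have "\<beta> * (\<alpha> / (1 - \<beta>)) \<le> \<beta> * sh t" using Suc beta0 by (intro mult_left_mono)
  moreover have "0 \<le> exp (st t / 2) * w (int t) \<omega> * exp (- sh t / 2)" by (simp add: w_nonneg)
  ultimately show ?case using a by (simp add: X_term)
qed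

lemma st_ge: "\<alpha> / (1 - \<beta>) \<le> st t"
  using S_nonneg[OF sm] by (simp add: logsig_eq)

lemma st_rec: "st (Suc t) = \<alpha> + \<beta> * st t + exp (st t / 2) * w (int t) \<omega> * exp (- st t / 2)"
proof -
  have e: "exp (st t / 2) * w (int t) \<omega> * exp (- st t / 2) = w (int t) \<omega>"
    by (simp add: mult.commute mult.left_commute flip: exp_add)
  have a: "\<alpha> + \<beta> * (\<alpha> / (1 - \<beta>)) = \<alpha> / (1 - \<beta>)" using beta1 by (simp add: field_simps)
  have "st (Suc t) = \<alpha> / (1 - \<beta>) + S (int t + 1) \<omega>" by (simp add: logsig_eq add.commute)
  also have "\<dots> = \<alpha> / (1 - \<beta>) + w (int t) \<omega> + \<beta> * S (int t) \<omega>" by (simp add: S_rec[OF sm])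
  also have "\<dots> = \<alpha> + \<beta> * st t + w (int t) \<omega>" using a by (simp add: logsig_eq algebra_simps)
  finally show ?thesis using e by simp
qed

lemma D_step: "\<bar>sh (Suc t) - st (Suc t)\<bar> \<le> Lam (int t) \<omega> * \<bar>sh t - st t\<bar>"
proof -
  define C where "C = exp (st t / 2) * w (int t) \<omega>"
  define a where "a = \<alpha> / (1 - \<beta>)"
  have C0: "0 \<le> C" by (simp add: C_def w_nonneg)
  have "sh (Suc t) - st (Suc t) = (\<beta> * sh t + C * exp (- sh t / 2)) - (\<beta> * st t + C * exp (- st t / 2))"
    using st_rec[of t] by (simp add: X_term C_def)
  then have "\<bar>sh (Suc t) - st (Suc t)\<bar> \<le> max \<beta> (C * exp (- a / 2) / 2 - \<beta>) * \<bar>sh t - st t\<bar>"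
    using contr[OF beta0 C0 sh_ge[of t, folded a_def] st_ge[of t, folded a_def]] by simp
  moreover have "C * exp (- a / 2) / 2 = (1/2) * exp ((1/2) * S (int t) \<omega>) * w (int t) \<omega>"
  proof -
    have e: "st t = a + S (int t) \<omega>" by (simp add: logsig_eq a_def)
    have "st t / 2 + - a / 2 = (1/2) * S (int t) \<omega>" using e by linarith
    then have "exp (st t / 2) * exp (- a / 2) = exp ((1/2) * S (int t) \<omega>)" by (simp flip: exp_add)
    then show ?thesis unfolding C_def by (simp add: algebra_simps)
  qed
  ultimately show ?thesis by (simp add: Lam_def)
qed

lemma D_bound: "\<bar>sh t - st t\<bar> \<le> \<bar>sh 0 - st 0\<bar> * exp (\<Sum>i<t. ell L (Lam (int i) \<omega>))"
proof (induction t)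
  case 0 then show ?case by simp
next
  case (Suc t)
  have "\<bar>sh (Suc t) - st (Suc t)\<bar> \<le> Lam (int t) \<omega> * \<bar>sh t - st t\<bar>" by (rule D_step)
  also have "\<dots> \<le> exp (ell L (Lam (int t) \<omega>)) * (\<bar>sh 0 - st 0\<bar> * exp (\<Sum>i<t. ell L (Lam (int i) \<omega>)))"
    by (intro mult_mono exp_ell Suc) (auto simp: Lam_nonneg)
  also have "\<dots> = \<bar>sh 0 - st 0\<bar> * exp (\<Sum>i<Suc t. ell L (Lam (int i) \<omega>))"
    by (simp add: exp_add algebra_simps)
  finally show ?case .
qed

end

end


context egarch
begin

definition F1 :: "real \<Rightarrow> nat \<Rightarrow> (nat \<Rightarrow> real) \<Rightarrow> real" where "F1 L m x = ell L (Lm m x) + L"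
definition F2 :: "nat \<Rightarrow> (nat \<Rightarrow> real) \<Rightarrow> real" where "F2 m x = wf (x m)"
definition F3 :: "real \<Rightarrow> (nat \<Rightarrow> real) \<Rightarrow> real" where "F3 K2 x = max 0 (wf (x 0) - K2)"

lemma F1_meas[measurable]: "F1 L m \<in> borel_measurable (PiM {..m} (\<lambda>_. borel))"
  unfolding F1_def using measurable_compose[OF Lm_meas ell_meas] by measurable

lemma F2_meas[measurable]: "F2 m \<in> borel_measurable (PiM {..m} (\<lambda>_. borel))"
  unfolding F2_def using measurable_compose[OF comp_meas[of m m] wf_meas] by simp

lemma F3_meas[measurable]: "F3 K2 \<in> borel_measurable (PiM {..0} (\<lambda>_. borel))"
  unfolding F3_def using measurable_compose[OF comp_meas[of 0 0] wf_meas] by measurable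

lemma F1_nonneg: "0 \<le> F1 L m x" unfolding F1_def using ell_lb[of L "Lm m x"] by linarith
lemma F2_nonneg: "0 \<le> F2 m x" by (simp add: F2_def wf_nonneg)
lemma F3_nonneg: "0 \<le> F3 K2 x" by (simp add: F3_def)

lemma F2_win: "F2 m (win m i \<omega>) = w (i - int m) \<omega>" by (simp add: F2_def win_apply w_def)
lemma F3_win: "F3 K2 (win 0 i \<omega>) = max 0 (w i \<omega> - K2)" by (simp add: F3_def win_apply w_def)

lemma half_geo_le: "(1/2) * (1 + (\<Sum>k<m. \<beta> ^ k)) \<le> A0"
proof -
  have e1: "1 / (2 * (1 - \<beta>)) = (1 / (1 - \<beta>)) / 2" by simp
  have "(1/2) * (1 + (\<Sum>k<m. \<beta> ^ k)) = 1/2 + (\<Sum>k<m. \<beta> ^ k) / 2" by simp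
  also have "\<dots> \<le> 1/2 + (1 / (1 - \<beta>)) / 2" using geo_le[of m]
    by (intro add_left_mono divide_right_mono) auto
  also have "\<dots> = A0" unfolding A0_def e1 ..
  finally show ?thesis .
qed

lemma A0_pos: "0 < A0"
proof -
  have "0 < 1 / (2 * (1 - \<beta>))" using beta1 by (intro divide_pos_pos) auto
  then show ?thesis unfolding A0_def by linarith
qed

lemma F1_win_ub:
  assumes L0: "0 \<le> L"
  shows "F1 L m (win m i \<omega>) \<le> L + (\<Sum>k<Suc m. w (i - int k) \<omega>)"
proof -
  have "ell L (Lm m (win m i \<omega>)) \<le> (1/2) * wf (win m i \<omega> 0) + (1/2) * (\<Sum>k<m. \<beta> ^ k * wf (win m i \<omega> (Suc k)))"
    by (rule ell_Lm_ub[OF L0])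
  also have "\<dots> = (1/2) * w i \<omega> + (1/2) * (\<Sum>k<m. \<beta> ^ k * w (i - int (Suc k)) \<omega>)"
    by (simp add: win_apply w_def)
  also have "\<dots> \<le> w i \<omega> + (\<Sum>k<m. w (i - int (Suc k)) \<omega>)"
  proof -
    have "(\<Sum>k<m. \<beta> ^ k * w (i - int (Suc k)) \<omega>) \<le> (\<Sum>k<m. w (i - int (Suc k)) \<omega>)"
    proof (rule sum_mono)
      fix k
      have "\<beta> ^ k \<le> 1" using beta0 beta1 by (simp add: power_le_one)
      from mult_right_mono[OF this w_nonneg[of "i - int (Suc k)" \<omega>]]
      show "\<beta> ^ k * w (i - int (Suc k)) \<omega> \<le> w (i - int (Suc k)) \<omega>" by simp
    qed
    moreover have "0 \<le> (\<Sum>k<m. \<beta> ^ k * w (i - int (Suc k)) \<omega>)"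
      by (intro sum_nonneg mult_nonneg_nonneg) (auto simp: beta0 w_nonneg)
    ultimately show ?thesis using w_nonneg[of i \<omega>] by linarith
  qed
  also have "\<dots> = (\<Sum>k<Suc m. w (i - int k) \<omega>)"
    by (subst sum.lessThan_Suc_shift) simp
  finally show ?thesis by (simp add: F1_def)
qed

lemma F1_sq_int:
  assumes L0: "0 \<le> L"
  shows "integrable M (\<lambda>\<omega>. (F1 L m (win m 0 \<omega>))^2)"
proof (rule Bochner_Integration.integrable_bound[where f="\<lambda>\<omega>. 2 * L^2 + 2 * (real (Suc m) * (\<Sum>k<Suc m. (w (0 - int k) \<omega>)^2))"])
  show "integrable M (\<lambda>\<omega>. 2 * L^2 + 2 * (real (Suc m) * (\<Sum>k<Suc m. (w (0 - int k) \<omega>)^2)))"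
    using w2_int by (intro Bochner_Integration.integrable_add integrable_mult_right integrable_sum) auto
  show "(\<lambda>\<omega>. (F1 L m (win m 0 \<omega>))^2) \<in> borel_measurable M" by measurable
  show "AE x in M. norm ((F1 L m (win m 0 x))^2) \<le> norm (2 * L^2 + 2 * (real (Suc m) * (\<Sum>k<Suc m. (w (0 - int k) x)^2)))"
  proof (intro AE_I2)
    fix x
    define V where "V = (\<Sum>k<Suc m. w (0 - int k) x)"
    have F0: "0 \<le> F1 L m (win m 0 x)" by (rule F1_nonneg)
    have Fle: "F1 L m (win m 0 x) \<le> L + V" using F1_win_ub[OF L0, of m 0 x] by (simp add: V_def)
    have "(F1 L m (win m 0 x))^2 \<le> (L + V)^2" using F0 Fle by (intro power_mono) auto
    also have "\<dots> \<le> 2 * L^2 + 2 * V^2"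
    proof -
      have "0 \<le> (L - V)^2" by simp
      then show ?thesis by (simp add: power2_eq_square algebra_simps)
    qed
    also have "V^2 \<le> (\<Sum>k<Suc m. (w (0 - int k) x)^2) * real (card {..<Suc m})"
      unfolding V_def by (rule sum_squared_le_sum_of_squares)
    finally have "(F1 L m (win m 0 x))^2 \<le> 2 * L^2 + 2 * (real (Suc m) * (\<Sum>k<Suc m. (w (0 - int k) x)^2))"
      by (simp add: algebra_simps)
    moreover have "0 \<le> 2 * L^2 + 2 * (real (Suc m) * (\<Sum>k<Suc m. (w (0 - int k) x)^2))"
      by (intro add_nonneg_nonneg mult_nonneg_nonneg sum_nonneg) auto
    ultimately show "norm ((F1 L m (win m 0 x))^2) \<le> norm (2 * L^2 + 2 * (real (Suc m) * (\<Sum>k<Suc m. (w (0 - int k) x)^2)))"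
      by simp
  qed
qed

lemma F2_sq_int: "integrable M (\<lambda>\<omega>. (F2 m (win m 0 \<omega>))^2)"
  using w2_int[of "0 - int m"] by (simp add: F2_win)

lemma F3_sq_int:
  assumes "0 \<le> K2"
  shows "integrable M (\<lambda>\<omega>. (F3 K2 (win 0 0 \<omega>))^2)"
proof (rule Bochner_Integration.integrable_bound[where f="\<lambda>\<omega>. (w 0 \<omega>)^2"])
  show "integrable M (\<lambda>\<omega>. (w 0 \<omega>)^2)" by (rule w2_int)
  show "(\<lambda>\<omega>. (F3 K2 (win 0 0 \<omega>))^2) \<in> borel_measurable M" by measurable
  show "AE x in M. norm ((F3 K2 (win 0 0 x))^2) \<le> norm ((w 0 x)^2)"
  proof (intro AE_I2)
    fix x
    have "0 \<le> max 0 (w 0 x - K2)" "max 0 (w 0 x - K2) \<le> w 0 x" using assms w_nonneg[of 0 x] by auto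
    then have "(max 0 (w 0 x - K2))^2 \<le> (w 0 x)^2" by (intro power_mono) auto
    then show "norm ((F3 K2 (win 0 0 x))^2) \<le> norm ((w 0 x)^2)" by (simp add: F3_win)
  qed
qed

lemma F2_mean: "(\<integral>\<omega>. F2 m (win m 0 \<omega>) \<partial>M) = \<mu>w"
  by (simp add: F2_win w_mean)

lemma u_int:
  assumes "0 \<le> K1"
  shows "integrable M (\<lambda>\<omega>. max 0 (w j \<omega> - K1))"
proof (rule Bochner_Integration.integrable_bound[where f="w j"])
  show "integrable M (w j)" by (rule w_int)
  show "(\<lambda>\<omega>. max 0 (w j \<omega> - K1)) \<in> borel_measurable M" by measurable
  show "AE x in M. norm (max 0 (w j x - K1)) \<le> norm (w j x)"
    using assms w_nonneg[of j] by (intro AE_I2) auto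
qed

lemma u_mean:
  assumes K1: "0 < K1"
  shows "(\<integral>\<omega>. max 0 (w j \<omega> - K1) \<partial>M) \<le> W2 / K1"
proof -
  have "(\<integral>\<omega>. max 0 (w j \<omega> - K1) \<partial>M) = (\<integral>\<omega>. max 0 (w 0 \<omega> - K1) \<partial>M)"
    unfolding w_def using Z_shift_integral[of "\<lambda>z. max 0 (wf z - K1)" j] by simp
  also have "\<dots> \<le> (\<integral>\<omega>. (w 0 \<omega>)^2 / K1 \<partial>M)"
  proof (rule integral_mono)
    show "integrable M (\<lambda>\<omega>. max 0 (w 0 \<omega> - K1))" using u_int K1 by simp
    show "integrable M (\<lambda>\<omega>. (w 0 \<omega>)^2 / K1)" using w2_int by simp
    fix x
    show "max 0 (w 0 x - K1) \<le> (w 0 x)^2 / K1"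
    proof (cases "w 0 x \<le> K1")
      case True then show ?thesis using K1 by simp
    next
      case False
      then have "w 0 x * K1 \<le> w 0 x * w 0 x" using K1 by (intro mult_left_mono) auto
      then have "w 0 x \<le> (w 0 x)^2 / K1" using K1 by (simp add: field_simps power2_eq_square)
      then show ?thesis using False K1 by simp
    qed
  qed
  also have "\<dots> = W2 / K1" by (simp add: W2_def)
  finally show ?thesis .
qed

lemma F3_mean:
  assumes "0 < K2"
  shows "(\<integral>\<omega>. F3 K2 (win 0 0 \<omega>) \<partial>M) \<le> W2 / K2"
  using u_mean[OF assms, of 0] by (simp add: F3_win)

end


context egarch
begin

lemma Lm_le_Lam:
  assumes sm: "summ \<omega>"
  shows "Lm m (win m 0 \<omega>) \<le> Lam 0 \<omega>"
proof -
  define P where "P = (\<Sum>k<m. \<beta> ^ k * w (0 - 1 - int k) \<omega>)"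
  have "S 0 \<omega> = P + \<beta> ^ m * S (0 - int m) \<omega>" using S_split[OF sm, of 0 m] by (simp add: P_def)
  moreover have "0 \<le> \<beta> ^ m * S (0 - int m) \<omega>" using S_nonneg[OF sm] beta0 by simp
  ultimately have PS: "P \<le> S 0 \<omega>" by linarith
  have "(1/2) * exp ((1/2) * P) * w 0 \<omega> \<le> (1/2) * exp ((1/2) * S 0 \<omega>) * w 0 \<omega>"
    using PS w_nonneg[of 0 \<omega>] by (intro mult_right_mono mult_left_mono) auto
  then show ?thesis unfolding Lm_win Lam_def P_def[symmetric] by (intro max.mono) auto
qed

lemma F1_mean:
  assumes L0: "0 \<le> L" and K1: "0 < K1"
   and hyp: "\<And>K. 0 \<le> K \<Longrightarrow> integrable M (\<lambda>\<omega>. min (ell L (Lam 0 \<omega>)) K) \<and> (\<integral>\<omega>. min (ell L (Lam 0 \<omega>)) K \<partial>M) \<le> - \<eta>"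
  shows "(\<integral>\<omega>. F1 L m (win m 0 \<omega>) \<partial>M) \<le> L - \<eta> + A0 * (W2 / K1)"
proof -
  define K where "K = A0 * K1"
  have K0: "0 \<le> K" using A0_pos K1 by (simp add: K_def)
  define lm where "lm \<omega> = ell L (Lm m (win m 0 \<omega>))" for \<omega>
  have lm_meas[measurable]: "lm \<in> borel_measurable M"
    unfolding lm_def using measurable_compose[OF win_meas measurable_compose[OF Lm_meas ell_meas]] by simp
  have F1int: "integrable M (\<lambda>\<omega>. F1 L m (win m 0 \<omega>))"
    by (rule square_integrable_imp_integrable[OF _ F1_sq_int[OF L0]]) measurable
  have lm_eq: "lm = (\<lambda>\<omega>. F1 L m (win m 0 \<omega>) - L)" by (auto simp: lm_def F1_def)
  have lm_int: "integrable M lm" unfolding lm_eq using F1int by simp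
  have min_int: "integrable M (\<lambda>\<omega>. min (lm \<omega>) K)"
  proof (rule integrable_const_bound[where B="L + K"])
    show "AE x in M. norm (min (lm x) K) \<le> L + K"
    proof (intro AE_I2)
      fix x
      have "- L \<le> lm x" unfolding lm_def by (rule ell_lb)
      then show "norm (min (lm x) K) \<le> L + K" using L0 K0 by (simp add: abs_le_iff min_def)
    qed
  qed measurable
  have ex_eq: "(\<lambda>\<omega>. max 0 (lm \<omega> - K)) = (\<lambda>\<omega>. lm \<omega> - min (lm \<omega>) K)"
    by (auto simp: max_def min_def)
  have ex_int: "integrable M (\<lambda>\<omega>. max 0 (lm \<omega> - K))" unfolding ex_eq using lm_int min_int by simp
  have dec: "(\<integral>\<omega>. lm \<omega> \<partial>M) = (\<integral>\<omega>. min (lm \<omega>) K \<partial>M) + (\<integral>\<omega>. max 0 (lm \<omega> - K) \<partial>M)"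
    unfolding ex_eq using lm_int min_int by simp
  have part1: "(\<integral>\<omega>. min (lm \<omega>) K \<partial>M) \<le> - \<eta>"
  proof -
    have "(\<integral>\<omega>. min (lm \<omega>) K \<partial>M) \<le> (\<integral>\<omega>. min (ell L (Lam 0 \<omega>)) K \<partial>M)"
    proof (rule integral_mono_AE[OF min_int conjunct1[OF hyp[OF K0]]])
      show "AE x in M. min (lm x) K \<le> min (ell L (Lam 0 x)) K"
        using summable_AE
      proof (rule AE_mp, intro AE_I2 impI)
        fix x assume "summ x"
        then have "Lm m (win m 0 x) \<le> Lam 0 x" by (rule Lm_le_Lam)
        then have "lm x \<le> ell L (Lam 0 x)" unfolding lm_def by (rule ell_mono)
        then show "min (lm x) K \<le> min (ell L (Lam 0 x)) K" by (rule min.mono) simp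
      qed
    qed
    also have "\<dots> \<le> - \<eta>" using hyp[OF K0] by simp
    finally show ?thesis .
  qed
  define r where "r \<omega> = (1/2) * max 0 (w 0 \<omega> - K1) + (1/2) * (\<Sum>k<m. \<beta> ^ k * max 0 (w (0 - int (Suc k)) \<omega> - K1))" for \<omega>
  have r_int: "integrable M r"
    unfolding r_def using u_int K1
    by (intro Bochner_Integration.integrable_add integrable_mult_right integrable_sum) auto
  have part2: "(\<integral>\<omega>. max 0 (lm \<omega> - K) \<partial>M) \<le> A0 * (W2 / K1)"
  proof -
    have "(\<integral>\<omega>. max 0 (lm \<omega> - K) \<partial>M) \<le> (\<integral>\<omega>. r \<omega> \<partial>M)"
    proof (rule integral_mono[OF ex_int r_int])
      fix x
      have "max 0 (lm x - K) \<le> (1/2) * max 0 (wf (win m 0 x 0) - K1) + (1/2) * (\<Sum>k<m. \<beta> ^ k * max 0 (wf (win m 0 x (Suc k)) - K1))"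
        unfolding lm_def K_def using ell_Lm_excess[OF L0, of K1 m "win m 0 x"] K1 by simp
      also have "\<dots> = r x" by (simp add: r_def win_apply w_def)
      finally show "max 0 (lm x - K) \<le> r x" .
    qed
    also have "(\<integral>\<omega>. r \<omega> \<partial>M) = (1/2) * (\<integral>\<omega>. max 0 (w 0 \<omega> - K1) \<partial>M) + (1/2) * (\<Sum>k<m. \<beta> ^ k * (\<integral>\<omega>. max 0 (w (0 - int (Suc k)) \<omega> - K1) \<partial>M))"
      unfolding r_def using u_int K1 by (simp add: integral_sum)
    also have "\<dots> \<le> (1/2) * (W2 / K1) + (1/2) * (\<Sum>k<m. \<beta> ^ k * (W2 / K1))"
      using u_mean[OF K1] beta0 by (intro add_mono mult_left_mono sum_mono) auto
    also have "\<dots> = (1/2) * (1 + (\<Sum>k<m. \<beta> ^ k)) * (W2 / K1)"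
    proof -
      have "(\<Sum>k<m. \<beta> ^ k * (W2 / K1)) = (\<Sum>k<m. \<beta> ^ k) * (W2 / K1)" by (rule sum_distrib_right[symmetric])
      then show ?thesis by (simp only: distrib_left distrib_right mult_1_left mult.assoc)
    qed
    also have "\<dots> \<le> A0 * (W2 / K1)"
      using half_geo_le[of m] W20 K1 by (intro mult_right_mono) auto
    finally show ?thesis .
  qed
  have "(\<integral>\<omega>. F1 L m (win m 0 \<omega>) \<partial>M) = (\<integral>\<omega>. lm \<omega> \<partial>M) + L"
    unfolding lm_eq using F1int prob_space by simp
  then show ?thesis using dec part1 part2 by linarith
qed

end


context egarch
begin

lemma omega_conv:
  fixes \<omega> :: 'a and s0 L \<eta> \<theta> \<mu>1 \<mu>3 \<epsilon>1 \<epsilon>3 K2 :: real and m :: nat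
  assumes s0: "\<alpha> / (1 - \<beta>) \<le> s0" and sm: "summ \<omega>" and L0: "0 \<le> L" and th: "0 < \<theta>"
   and e1: "eventually (\<lambda>n. (\<Sum>i<n. F1 L m (win m (int i) \<omega>)) \<le> real n * (\<mu>1 + \<epsilon>1)) sequentially"
   and e2: "eventually (\<lambda>n. (\<Sum>i<n. F2 m (win m (int i) \<omega>)) \<le> real n * (\<mu>w + \<epsilon>1)) sequentially"
   and e3: "eventually (\<lambda>n. (\<Sum>i<n. F3 K2 (win 0 (int i) \<omega>)) \<le> real n * (\<mu>3 + \<epsilon>3)) sequentially"
   and c1: "\<mu>1 + \<epsilon>1 - L + \<beta> ^ m * (\<mu>w + \<epsilon>1) / (1 - \<beta>) \<le> - \<theta>"
   and c2: "0 \<le> \<mu>3 + \<epsilon>3" "(\<mu>3 + \<epsilon>3) / (1 - \<beta>) \<le> \<theta> / 3" and K2: "0 \<le> K2"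
  shows "(\<lambda>t. exp (\<theta> / 3) ^ t * \<bar>exp (egarch_loghat \<alpha> \<beta> \<gamma> \<delta> Z s0 t \<omega>) - exp (egarch_logsig \<alpha> \<beta> \<gamma> \<delta> Z (int t) \<omega>)\<bar>) \<longlonglongrightarrow> 0"
proof -
  let ?sh = "\<lambda>t. egarch_loghat \<alpha> \<beta> \<gamma> \<delta> Z s0 t \<omega>"
  let ?st = "\<lambda>t. egarch_logsig \<alpha> \<beta> \<gamma> \<delta> Z (int t) \<omega>"
  have b1: "0 < 1 - \<beta>" using beta1 by simp
  define R where "R i = \<beta> ^ m * S (int i - int m) \<omega>" for i :: nat
  have R0: "0 \<le> R i" for i unfolding R_def using S_nonneg[OF sm] beta0 by simp
  have Rrec: "R (Suc i) = \<beta> ^ m * F2 m (win m (int i) \<omega>) + \<beta> * R i" for i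
  proof -
    have eq: "int (Suc i) - int m = (int i - int m) + 1" by simp
    have "S (int (Suc i) - int m) \<omega> = w (int i - int m) \<omega> + \<beta> * S (int i - int m) \<omega>"
      unfolding eq by (rule S_rec[OF sm])
    then show ?thesis unfolding R_def by (simp add: F2_win algebra_simps)
  qed
  define C0 where "C0 = R 0 / (1 - \<beta>)"
  obtain N where N: "\<And>n. n \<ge> N \<Longrightarrow> (\<Sum>i<n. F1 L m (win m (int i) \<omega>)) \<le> real n * (\<mu>1 + \<epsilon>1)
      \<and> (\<Sum>i<n. F2 m (win m (int i) \<omega>)) \<le> real n * (\<mu>w + \<epsilon>1)"
    using eventually_conj[OF e1 e2] by (auto simp: eventually_sequentially)
  have ellsum: "(\<Sum>i<n. ell L (Lam (int i) \<omega>)) \<le> C0 - \<theta> * real n" if n: "n \<ge> N" for n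
  proof -
    have "(\<Sum>i<n. ell L (Lam (int i) \<omega>)) \<le> (\<Sum>i<n. (F1 L m (win m (int i) \<omega>) - L) + R i)"
    proof (rule sum_mono)
      fix i
      show "ell L (Lam (int i) \<omega>) \<le> (F1 L m (win m (int i) \<omega>) - L) + R i"
        using Lam_split[OF sm, of L "int i" m] by (simp add: F1_def R_def)
    qed
    also have "\<dots> = (\<Sum>i<n. F1 L m (win m (int i) \<omega>)) - real n * L + (\<Sum>i<n. R i)"
      by (simp add: sum.distrib sum_subtractf)
    also have "(\<Sum>i<n. R i) \<le> (R 0 + \<beta> ^ m * (\<Sum>i<n. F2 m (win m (int i) \<omega>))) / (1 - \<beta>)"
      by (rule telescope_R[where R=R and w="\<lambda>i. F2 m (win m (int i) \<omega>)" and c="\<beta> ^ m", OF R0 Rrec beta1])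
    also have "\<dots> \<le> (R 0 + \<beta> ^ m * (real n * (\<mu>w + \<epsilon>1))) / (1 - \<beta>)"
      using N[OF n] beta0 b1 by (intro divide_right_mono add_left_mono mult_left_mono) auto
    finally have "(\<Sum>i<n. ell L (Lam (int i) \<omega>)) \<le> real n * (\<mu>1 + \<epsilon>1) - real n * L + (R 0 + \<beta> ^ m * (real n * (\<mu>w + \<epsilon>1))) / (1 - \<beta>)"
      using N[OF n] by linarith
    also have "\<dots> = C0 + real n * (\<mu>1 + \<epsilon>1 - L + \<beta> ^ m * (\<mu>w + \<epsilon>1) / (1 - \<beta>))"
      unfolding C0_def by (simp add: add_divide_distrib algebra_simps)
    also have "\<dots> \<le> C0 + real n * (- \<theta>)"
      using c1 by (intro add_left_mono mult_left_mono) auto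
    finally show ?thesis by (simp add: mult.commute)
  qed
  define c' where "c' = \<mu>3 + \<epsilon>3"
  obtain N3 where N3: "\<And>n. n \<ge> N3 \<Longrightarrow> (\<Sum>i<n. F3 K2 (win 0 (int i) \<omega>)) \<le> real n * c'"
    using e3 by (auto simp: eventually_sequentially c'_def)
  define u where "u i = F3 K2 (win 0 (int i) \<omega>)" for i
  have u0: "0 \<le> u i" for i by (simp add: u_def F3_nonneg)
  define U where "U = (\<Sum>i<N3. u i)"
  define K3 where "K3 = K2 + U + c'"
  have c'0: "0 \<le> c'" using c2 by (simp add: c'_def)
  have U0: "0 \<le> U" unfolding U_def using u0 by (simp add: sum_nonneg)
  have wb: "w (int t) \<omega> \<le> K3 + c' * real t" for t
  proof -
    have "w (int t) \<omega> \<le> K2 + u t" by (simp add: u_def F3_win)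
    also have "u t \<le> (\<Sum>i<Suc t. u i)" using u0 by (intro member_le_sum) auto
    also have "(\<Sum>i<Suc t. u i) \<le> U + c' * real (Suc t)"
    proof (cases "Suc t \<ge> N3")
      case True
      then have "(\<Sum>i<Suc t. u i) \<le> real (Suc t) * c'" unfolding u_def by (rule N3)
      then show ?thesis using U0 by (simp add: algebra_simps)
    next
      case False
      then have "(\<Sum>i<Suc t. u i) \<le> U" unfolding U_def using u0 by (intro sum_mono2) auto
      moreover have "0 \<le> c' * real (Suc t)" using c'0 by simp
      ultimately show ?thesis by linarith
    qed
    finally show ?thesis by (simp add: K3_def algebra_simps)
  qed
  have K30: "0 \<le> K3" using K2 U0 c'0 by (simp add: K3_def)
  have Srec': "S (int (Suc t)) \<omega> = w (int t) \<omega> + \<beta> * S (int t) \<omega>" for t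
    using S_rec[OF sm, of "int t"] by (simp add: add.commute)
  have Sb: "S (int t) \<omega> \<le> S 0 \<omega> + (K3 + c' * real t) / (1 - \<beta>)" for t
    using growth_S[where S="\<lambda>t. S (int t) \<omega>" and w="\<lambda>t. w (int t) \<omega>" and \<beta>=\<beta> and c=c' and K=K3,
        OF Srec' wb beta0 beta1 c'0 K30, of t] S_nonneg[OF sm, of 0] by simp
  define H where "H = \<alpha> / (1 - \<beta>) + S 0 \<omega> + K3 / (1 - \<beta>)"
  have stb: "?st t \<le> H + \<theta> / 3 * real t" for t
  proof -
    have "c' * real t / (1 - \<beta>) = (c' / (1 - \<beta>)) * real t" by simp
    also have "\<dots> \<le> \<theta> / 3 * real t" using c2 by (intro mult_right_mono) (auto simp: c'_def)
    finally have "c' * real t / (1 - \<beta>) \<le> \<theta> / 3 * real t" .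
    moreover have "?st t = \<alpha> / (1 - \<beta>) + S (int t) \<omega>" by (simp add: logsig_eq)
    moreover have "(K3 + c' * real t) / (1 - \<beta>) = K3 / (1 - \<beta>) + c' * real t / (1 - \<beta>)"
      by (simp add: add_divide_distrib)
    ultimately show ?thesis using Sb[of t] unfolding H_def by linarith
  qed
  define D0 where "D0 = \<bar>?sh 0 - ?st 0\<bar>"
  define B where "B = D0 * exp C0"
  have B0: "0 \<le> B" by (simp add: B_def D0_def)
  have Db: "\<bar>?sh t - ?st t\<bar> \<le> B * exp (- \<theta> * real t)" if t: "t \<ge> N" for t
  proof -
    have "\<bar>?sh t - ?st t\<bar> \<le> D0 * exp (\<Sum>i<t. ell L (Lam (int i) \<omega>))"
      unfolding D0_def by (rule D_bound[OF s0 sm])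
    also have "\<dots> \<le> D0 * exp (C0 - \<theta> * real t)"
      using ellsum[OF t] by (intro mult_left_mono) (auto simp: D0_def)
    also have "\<dots> = B * exp (- \<theta> * real t)" by (simp add: B_def exp_diff exp_minus field_simps)
    finally show ?thesis .
  qed
  define q where "q = exp (- \<theta> / 3)"
  define Cst where "Cst = B * exp (H + B)"
  have bound: "exp (\<theta> / 3) ^ t * \<bar>exp (?sh t) - exp (?st t)\<bar> \<le> Cst * q ^ t" if t: "t \<ge> N" for t
  proof -
    have D: "\<bar>?sh t - ?st t\<bar> \<le> B * exp (- \<theta> * real t)" by (rule Db[OF t])
    have DB: "\<bar>?sh t - ?st t\<bar> \<le> B"
    proof -
      have "exp (- \<theta> * real t) \<le> 1" using th by simp
      from mult_left_mono[OF this B0] have "B * exp (- \<theta> * real t) \<le> B" by simp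
      then show ?thesis using D by linarith
    qed
    have mx: "max (?sh t) (?st t) \<le> H + \<theta> / 3 * real t + B"
      using stb[of t] DB by (auto simp: abs_le_iff max_def)
    have "\<bar>exp (?sh t) - exp (?st t)\<bar> \<le> exp (max (?sh t) (?st t)) * \<bar>?sh t - ?st t\<bar>"
      by (rule exp_diff_le)
    also have "\<dots> \<le> exp (H + \<theta> / 3 * real t + B) * (B * exp (- \<theta> * real t))"
      using mx D by (intro mult_mono) auto
    finally have *: "\<bar>exp (?sh t) - exp (?st t)\<bar> \<le> exp (H + \<theta> / 3 * real t + B) * (B * exp (- \<theta> * real t))" .
    have "exp (\<theta> / 3) ^ t * \<bar>exp (?sh t) - exp (?st t)\<bar> \<le> exp (\<theta> / 3) ^ t * (exp (H + \<theta> / 3 * real t + B) * (B * exp (- \<theta> * real t)))"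
      using * by (intro mult_left_mono) auto
    also have "\<dots> = Cst * q ^ t"
    proof -
      have e1: "exp (\<theta> / 3) ^ t = exp (real t * (\<theta> / 3))" by (rule exp_of_nat_mult[symmetric])
      have e2: "q ^ t = exp (real t * (- \<theta> / 3))" unfolding q_def by (rule exp_of_nat_mult[symmetric])
      have "exp (real t * (\<theta> / 3)) * (exp (H + \<theta> / 3 * real t + B) * (B * exp (- \<theta> * real t)))
          = B * exp (real t * (\<theta> / 3) + (H + \<theta> / 3 * real t + B) + (- \<theta> * real t))"
      proof -
        have "exp (real t * (\<theta> / 3) + (H + \<theta> / 3 * real t + B) + (- \<theta> * real t))
           = exp (real t * (\<theta> / 3)) * exp (H + \<theta> / 3 * real t + B) * exp (- \<theta> * real t)"
          by (simp only: exp_add)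
        then show ?thesis by (simp only: ac_simps)
      qed
      also have "real t * (\<theta> / 3) + (H + \<theta> / 3 * real t + B) + (- \<theta> * real t) = (H + B) + real t * (- \<theta> / 3)"
        by (simp add: algebra_simps)
      also have "B * exp ((H + B) + real t * (- \<theta> / 3)) = Cst * exp (real t * (- \<theta> / 3))"
        unfolding Cst_def by (simp only: exp_add ac_simps)
      finally show ?thesis using e1 e2 by simp
    qed
    finally show ?thesis .
  qed
  have q1: "\<bar>q\<bar> < 1" using th by (simp add: q_def)
  have lim: "(\<lambda>t. Cst * q ^ t) \<longlonglongrightarrow> 0"
    using tendsto_mult_right_zero[OF LIMSEQ_power_zero[of q]] q1 by simp
  show ?thesis
  proof (rule tendsto_sandwich[OF _ _ tendsto_const lim])
    show "\<forall>\<^sub>F t in sequentially. 0 \<le> exp (\<theta> / 3) ^ t * \<bar>exp (?sh t) - exp (?st t)\<bar>" by simp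
    show "\<forall>\<^sub>F t in sequentially. exp (\<theta> / 3) ^ t * \<bar>exp (?sh t) - exp (?st t)\<bar> \<le> Cst * q ^ t"
      using bound by (auto simp: eventually_sequentially)
  qed
qed

end


lemma div_aux: "0 \<le> (a::real) \<Longrightarrow> 0 < e \<Longrightarrow> a / (a / e + 1) \<le> e"
proof -
  assume a: "0 \<le> a" and e: "0 < e"
  have pos: "0 < a / e + 1" using a e by (simp add: add_nonneg_pos)
  have "a \<le> e * (a / e + 1)" using e by (simp add: algebra_simps)
  then show ?thesis using pos by (simp add: divide_le_eq mult.commute)
qed

context egarch
begin

lemma main_result:
  assumes s0: "\<alpha> / (1 - \<beta>) \<le> s0" and cond: "expect_log_neg M (egarch_inv_arg \<beta> \<gamma> \<delta> Z)"
  shows "\<exists>\<rho>::real. \<rho> > 1 \<and>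
    (AE \<omega> in M. (\<lambda>t::nat. \<rho> ^ t *
        \<bar>exp (egarch_loghat \<alpha> \<beta> \<gamma> \<delta> Z s0 t \<omega>) - exp (egarch_logsig \<alpha> \<beta> \<gamma> \<delta> Z (int t) \<omega>)\<bar>)
      \<longlonglongrightarrow> 0)"
proof -
  have Ym: "egarch_inv_arg \<beta> \<gamma> \<delta> Z \<in> borel_measurable M"
    unfolding egarch_inv_arg_def by measurable
  obtain L \<eta> where L0: "0 \<le> L" and eta: "0 < \<eta>"
    and H: "\<forall>K\<ge>0. integrable M (\<lambda>\<omega>. min (ln (max (egarch_inv_arg \<beta> \<gamma> \<delta> Z \<omega>) (exp (- L)))) K)
     \<and> (\<integral>\<omega>. min (ln (max (egarch_inv_arg \<beta> \<gamma> \<delta> Z \<omega>) (exp (- L)))) K \<partial>M) \<le> - \<eta>"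
    using cond_trunc[OF Ym cond] by blast
  have hyp: "integrable M (\<lambda>\<omega>. min (ell L (Lam 0 \<omega>)) K) \<and> (\<integral>\<omega>. min (ell L (Lam 0 \<omega>)) K \<partial>M) \<le> - \<eta>"
    if "0 \<le> K" for K
    using H that by (simp add: ell_def inv_arg_eq)
  have b1: "0 < 1 - \<beta>" using beta1 by simp
  define \<theta> where "\<theta> = \<eta> / 4"
  have th: "0 < \<theta>" using eta by (simp add: \<theta>_def)
  define K1 where "K1 = (A0 * W2) / (\<eta> / 4) + 1"
  have K1: "0 < K1" unfolding K1_def using A0_pos W20 eta by (intro add_nonneg_pos) auto
  have K1b: "A0 * (W2 / K1) \<le> \<eta> / 4"
    using div_aux[of "A0 * W2" "\<eta> / 4"] A0_pos W20 eta unfolding K1_def by simp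
  define \<epsilon>1 where "\<epsilon>1 = min 1 (\<eta> / 4)"
  have e1pos: "0 < \<epsilon>1" using eta by (simp add: \<epsilon>1_def)
  define c where "c = \<eta> * (1 - \<beta>) / (4 * (\<mu>w + 1))"
  have c0: "0 < c" unfolding c_def using eta b1 \<mu>w0 by (intro divide_pos_pos mult_pos_pos) auto
  have "(\<lambda>n. \<beta> ^ n) \<longlonglongrightarrow> 0" by (rule LIMSEQ_power_zero) (use beta0 beta1 in simp)
  from order_tendstoD(2)[OF this c0] obtain m where m: "\<beta> ^ m < c"
    by (auto simp: eventually_sequentially)
  have mb: "\<beta> ^ m * (\<mu>w + \<epsilon>1) / (1 - \<beta>) \<le> \<eta> / 4"
  proof -
    have "\<beta> ^ m * (\<mu>w + \<epsilon>1) \<le> c * (\<mu>w + 1)"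
      using m \<mu>w0 e1pos beta0 c0 by (intro mult_mono) (auto simp: \<epsilon>1_def)
    also have "\<dots> = \<eta> * (1 - \<beta>) / 4"
    proof -
      have g: "\<And>x y::real. y > 0 \<Longrightarrow> x / (4 * y) * y = x / 4" by (simp add: field_simps)
      show ?thesis unfolding c_def by (rule g) (use \<mu>w0 in simp)
    qed
    finally have "\<beta> ^ m * (\<mu>w + \<epsilon>1) \<le> \<eta> * (1 - \<beta>) / 4" .
    then show ?thesis using b1 by (simp add: divide_le_eq mult.commute)
  qed
  define \<mu>1 where "\<mu>1 = (\<integral>\<omega>. F1 L m (win m 0 \<omega>) \<partial>M)"
  have \<mu>1b: "\<mu>1 \<le> L - \<eta> + A0 * (W2 / K1)"
    unfolding \<mu>1_def by (rule F1_mean[OF L0 K1 hyp])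
  have c1: "\<mu>1 + \<epsilon>1 - L + \<beta> ^ m * (\<mu>w + \<epsilon>1) / (1 - \<beta>) \<le> - \<theta>"
  proof -
    have "\<epsilon>1 \<le> \<eta> / 4" by (simp add: \<epsilon>1_def)
    then show ?thesis using \<mu>1b K1b mb unfolding \<theta>_def by linarith
  qed
  define K2 where "K2 = W2 / (\<theta> * (1 - \<beta>) / 6) + 1"
  have K2: "0 < K2" unfolding K2_def using W20 th b1 by (intro add_nonneg_pos) auto
  have K2b: "W2 / K2 \<le> \<theta> * (1 - \<beta>) / 6"
    using div_aux[of W2 "\<theta> * (1 - \<beta>) / 6"] W20 th b1 unfolding K2_def by simp
  define \<epsilon>3 where "\<epsilon>3 = \<theta> * (1 - \<beta>) / 6"
  have e3pos: "0 < \<epsilon>3" using th b1 by (simp add: \<epsilon>3_def)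
  define \<mu>3 where "\<mu>3 = (\<integral>\<omega>. F3 K2 (win 0 0 \<omega>) \<partial>M)"
  have \<mu>3b: "\<mu>3 \<le> W2 / K2" unfolding \<mu>3_def by (rule F3_mean[OF K2])
  have \<mu>30: "0 \<le> \<mu>3" unfolding \<mu>3_def by (rule Bochner_Integration.integral_nonneg) (simp add: F3_nonneg)
  have c2a: "0 \<le> \<mu>3 + \<epsilon>3" using \<mu>30 e3pos by simp
  have c2b: "(\<mu>3 + \<epsilon>3) / (1 - \<beta>) \<le> \<theta> / 3"
  proof -
    have "\<mu>3 + \<epsilon>3 \<le> \<theta> * (1 - \<beta>) / 3" using \<mu>3b K2b unfolding \<epsilon>3_def by linarith
    then show ?thesis using b1 by (simp add: divide_le_eq mult.commute)
  qed
  have A2: "AE \<omega> in M. eventually (\<lambda>n. (\<Sum>i<n. F1 L m (win m (int i) \<omega>)) \<le> real n * (\<mu>1 + \<epsilon>1)) sequentially"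
    unfolding \<mu>1_def by (rule slln_window[OF F1_meas F1_nonneg F1_sq_int[OF L0] e1pos])
  have A3: "AE \<omega> in M. eventually (\<lambda>n. (\<Sum>i<n. F2 m (win m (int i) \<omega>)) \<le> real n * (\<mu>w + \<epsilon>1)) sequentially"
    using slln_window[OF F2_meas F2_nonneg F2_sq_int e1pos] by (simp add: F2_mean)
  have A4: "AE \<omega> in M. eventually (\<lambda>n. (\<Sum>i<n. F3 K2 (win 0 (int i) \<omega>)) \<le> real n * (\<mu>3 + \<epsilon>3)) sequentially"
    unfolding \<mu>3_def using K2 by (intro slln_window[OF F3_meas F3_nonneg F3_sq_int e3pos]) simp
  have "AE \<omega> in M. (\<lambda>t::nat. exp (\<theta> / 3) ^ t *
        \<bar>exp (egarch_loghat \<alpha> \<beta> \<gamma> \<delta> Z s0 t \<omega>) - exp (egarch_logsig \<alpha> \<beta> \<gamma> \<delta> Z (int t) \<omega>)\<bar>) \<longlonglongrightarrow> 0"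
    using summable_AE A2 A3 A4
  proof (eventually_elim)
    case (elim \<omega>)
    show ?case
      by (rule omega_conv[OF s0 elim(1) L0 th elim(2) elim(3) elim(4) c1 c2a c2b]) (use K2 in simp)
  qed
  moreover have "exp (\<theta> / 3) > 1" using th by simp
  ultimately show ?thesis by blast
qed

end

theorem proposition3p9:
  fixes M :: "'a measure" and Z :: "int \<Rightarrow> 'a \<Rightarrow> real"
    and \<alpha> \<beta> \<gamma> \<delta> s0 :: real
  assumes "prob_space M"
    and indep: "prob_space.indep_vars M (\<lambda>_. borel) Z UNIV"
    and ident: "\<And>t. distr M borel (Z t) = distr M borel (Z 0)"
    and int1: "integrable M (Z 0)" and mean0: "(\<integral>\<omega>. Z 0 \<omega> \<partial>M) = 0"
    and int2: "integrable M (\<lambda>\<omega>. (Z 0 \<omega>)\<^sup>2)" and var1: "(\<integral>\<omega>. (Z 0 \<omega>)\<^sup>2 \<partial>M) = 1"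
    and beta: "0 \<le> \<beta>" "\<beta> < 1"
    and delta: "\<delta> \<ge> \<bar>\<gamma>\<bar>"
    and s0: "s0 \<ge> \<alpha> / (1 - \<beta>)"
    and cond: "expect_log_neg M (egarch_inv_arg \<beta> \<gamma> \<delta> Z)"
  shows "\<exists>\<rho>::real. \<rho> > 1 \<and>
    (AE \<omega> in M. (\<lambda>t::nat. \<rho> ^ t *
        \<bar>exp (egarch_loghat \<alpha> \<beta> \<gamma> \<delta> Z s0 t \<omega>) - exp (egarch_logsig \<alpha> \<beta> \<gamma> \<delta> Z (int t) \<omega>)\<bar>)
      \<longlonglongrightarrow> 0)"
proof -
  have "egarch M Z \<beta> \<gamma> \<delta>"
    unfolding egarch_def egarch_axioms_def iid_seq_def iid_seq_axioms_def
    using assms by auto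
  then interpret E: egarch M Z \<alpha> \<beta> \<gamma> \<delta> .
  show ?thesis using E.main_result s0 cond by simp
qed


end
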